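(* Let $T$ be a complete first-order theory in a countable language with an uncountable atomic model. Suppose $\alpha(\mathbf z,\mathbf x_1,\dots,\mathbf x_n)$ is $(n+1)$-striated and $\beta(\mathbf z,\mathbf y_1,\dots,\mathbf y_m)$ is $(m+1)$-striated (with the displayed partitions, the tuples of variables $\mathbf x_i,\mathbf y_j$ pairwise disjoint and disjoint from $\mathbf z$), and $\alpha\restriction_{\mathbf z}$ is equivalent to $\beta\restriction_{\mathbf z}$. Then there is a striated formula $\psi(\mathbf z,\mathbf x_1,\dots,\mathbf x_n,\mathbf y_1,\dots,\mathbf y_m)$ (with this partition) such that $\psi\vdash\alpha(\mathbf z,\mathbf x_1,\dots,\mathbf x_n)\wedge\beta(\mathbf z,\mathbf y_1,\dots,\mathbf y_m)$.
   Context: A complete formula is one isolating a complete type over $\emptyset$ realized in an atomic model. For a complete $\theta(\mathbf w)$ and a subsequence $\mathbf v$ of $\mathbf w$, $\theta\restriction_{\mathbf v}$ is the complete formula equivalent to $\exists\mathbf u\,\theta$, $\mathbf u$ the remaining variables. A complete formula $\theta(\mathbf z;\mathbf x)$ with a partition of its variables is extendible if there are countable atomic models $M\preceq N$ and tuples $\mathbf b\subseteq M$, $\mathbf a\subseteq N\setminus M$ with $N\models\theta(\mathbf b,\mathbf a)$. An $n$-striated formula is a complete formula $\theta(\mathbf y_0,\dots,\mathbf y_{n-1})$ with free variables partitioned into $n$ blocks such that for every $0<i<n$, with $\mathbf z=(\mathbf y_0,\dots,\mathbf y_{i-1})$ and $\mathbf x=(\mathbf y_i,\dots,\mathbf y_{n-1})$,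 $\theta(\mathbf z;\mathbf x)$ is extendible. (Equivalently, there are countable atomic models $M_0\preceq M_1\preceq\dots\preceq M_{n-1}$ and tuples $\mathbf a_0\subseteq M_0$, $\mathbf a_i\subseteq M_i\setminus M_{i-1}$ for $0<i<n$, with $M_{n-1}\models\theta(\mathbf a_0,\dots,\mathbf a_{n-1})$.) A striated formula is an $n$-striated formula for some $n$. *)

theory Defs
  imports Main "HOL-Library.Countable" "HOL-Library.Countable_Set"
begin

datatype 'f trm = Var nat | Fn 'f "'f trm list"

datatype ('f, 'r) fm =
    Eq "'f trm" "'f trm"
  | Rel 'r "'f trm list"
  | Neg "('f, 'r) fm"
  | Conj "('f, 'r) fm" "('f, 'r) fm"
  | Ex nat "('f, 'r) fm"

definition Imp :: "('f,'r) fm \<Rightarrow> ('f,'r) fm \<Rightarrow> ('f,'r) fm" where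
  "Imp a b = Neg (Conj a (Neg b))"

definition Iff :: "('f,'r) fm \<Rightarrow> ('f,'r) fm \<Rightarrow> ('f,'r) fm" where
  "Iff a b = Conj (Imp a b) (Imp b a)"

definition Exs :: "nat list \<Rightarrow> ('f,'r) fm \<Rightarrow> ('f,'r) fm" where
  "Exs us \<phi> = foldr Ex us \<phi>"

text \<open>A language: arities of the symbols. Countability of the language is imposed
  via the sort constraint countable on 'f and 'r in the theorem.\<close>
record ('f, 'r) lang =
  farity :: "'f \<Rightarrow> nat"
  rarity :: "'r \<Rightarrow> nat"

fun wf_trm :: "('f,'r) lang \<Rightarrow> 'f trm \<Rightarrow> bool" where
  "wf_trm L (Var n) = True"
| "wf_trm L (Fn f ts) = (length ts = farity L f \<and> (\<forall>t\<in>set ts. wf_trm L t))"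

fun wf_fm :: "('f,'r) lang \<Rightarrow> ('f,'r) fm \<Rightarrow> bool" where
  "wf_fm L (Eq s t) = (wf_trm L s \<and> wf_trm L t)"
| "wf_fm L (Rel r ts) = (length ts = rarity L r \<and> (\<forall>t\<in>set ts. wf_trm L t))"
| "wf_fm L (Neg \<phi>) = wf_fm L \<phi>"
| "wf_fm L (Conj \<phi> \<psi>) = (wf_fm L \<phi> \<and> wf_fm L \<psi>)"
| "wf_fm L (Ex x \<phi>) = wf_fm L \<phi>"

fun tvars :: "'f trm \<Rightarrow> nat set" where
  "tvars (Var n) = {n}"
| "tvars (Fn f ts) = (\<Union>t\<in>set ts. tvars t)"

fun freevars :: "('f,'r) fm \<Rightarrow> nat set" where
  "freevars (Eq s t) = tvars s \<union> tvars t"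
| "freevars (Rel r ts) = (\<Union>t\<in>set ts. tvars t)"
| "freevars (Neg \<phi>) = freevars \<phi>"
| "freevars (Conj \<phi> \<psi>) = freevars \<phi> \<union> freevars \<psi>"
| "freevars (Ex x \<phi>) = freevars \<phi> - {x}"

definition sentence :: "('f,'r) lang \<Rightarrow> ('f,'r) fm \<Rightarrow> bool" where
  "sentence L \<phi> \<longleftrightarrow> wf_fm L \<phi> \<and> freevars \<phi> = {}"

record ('a, 'f, 'r) strc =
  dom :: "'a set"
  fint :: "'f \<Rightarrow> 'a list \<Rightarrow> 'a"
  rint :: "'r \<Rightarrow> 'a list \<Rightarrow> bool"

definition is_struct :: "('f,'r) lang \<Rightarrow> ('a,'f,'r) strc \<Rightarrow> bool" where
  "is_struct L M \<longleftrightarrow> dom M \<noteq> {} \<and>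
     (\<forall>f as. length as = farity L f \<and> set as \<subseteq> dom M \<longrightarrow> fint M f as \<in> dom M)"

fun eval :: "('a,'f,'r) strc \<Rightarrow> (nat \<Rightarrow> 'a) \<Rightarrow> 'f trm \<Rightarrow> 'a" where
  "eval M e (Var n) = e n"
| "eval M e (Fn f ts) = fint M f (map (eval M e) ts)"

fun sat :: "('a,'f,'r) strc \<Rightarrow> (nat \<Rightarrow> 'a) \<Rightarrow> ('f,'r) fm \<Rightarrow> bool" where
  "sat M e (Eq s t) = (eval M e s = eval M e t)"
| "sat M e (Rel r ts) = rint M r (map (eval M e) ts)"
| "sat M e (Neg \<phi>) = (\<not> sat M e \<phi>)"
| "sat M e (Conj \<phi> \<psi>) = (sat M e \<phi> \<and> sat M e \<psi>)"
| "sat M e (Ex x \<phi>) = (\<exists>a\<in>dom M. sat M (e(x := a)) \<phi>)"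

definition satt :: "('a,'f,'r) strc \<Rightarrow> ('f,'r) fm \<Rightarrow> nat list \<Rightarrow> 'a list \<Rightarrow> bool" where
  "satt M \<theta> w as \<longleftrightarrow> length as = length w \<and> set as \<subseteq> dom M \<and>
     (\<forall>e. range e \<subseteq> dom M \<and> (\<forall>i<length w. e (w ! i) = as ! i) \<longrightarrow> sat M e \<theta>)"

definition models :: "('f,'r) lang \<Rightarrow> ('f,'r) fm set \<Rightarrow> ('a,'f,'r) strc \<Rightarrow> bool" where
  "models L T M \<longleftrightarrow> is_struct L M \<and>
     (\<forall>\<phi>\<in>T. \<forall>e. range e \<subseteq> dom M \<longrightarrow> sat M e \<phi>)"

text \<open>Since the language is countable,
  by Loewenheim--Skolem it suffices to test models with carrier contained in nat,
  i.e. (up to isomorphism) all countable models.\<close>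
definition entails :: "('f,'r) lang \<Rightarrow> ('f,'r) fm set \<Rightarrow> ('f,'r) fm \<Rightarrow> bool" where
  "entails L T \<phi> \<longleftrightarrow>
     (\<forall>M :: (nat,'f,'r) strc. models L T M \<longrightarrow> (\<forall>e. range e \<subseteq> dom M \<longrightarrow> sat M e \<phi>))"

definition complete_theory :: "('f,'r) lang \<Rightarrow> ('f,'r) fm set \<Rightarrow> bool" where
  "complete_theory L T \<longleftrightarrow> (\<forall>\<phi>\<in>T. sentence L \<phi>) \<and>
     (\<exists>M :: (nat,'f,'r) strc. models L T M) \<and>
     (\<forall>\<phi>. sentence L \<phi> \<longrightarrow> entails L T \<phi> \<or> entails L T (Neg \<phi>))"

definition elem_sub :: "('f,'r) lang \<Rightarrow> ('a,'f,'r) strc \<Rightarrow> ('a,'f,'r) strc \<Rightarrow> bool" where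
  "elem_sub L M N \<longleftrightarrow> is_struct L M \<and> is_struct L N \<and> dom M \<subseteq> dom N \<and>
     (\<forall>\<phi> e. wf_fm L \<phi> \<and> range e \<subseteq> dom M \<longrightarrow> (sat M e \<phi> \<longleftrightarrow> sat N e \<phi>))"

definition fm_in :: "('f,'r) lang \<Rightarrow> nat list \<Rightarrow> ('f,'r) fm \<Rightarrow> bool" where
  "fm_in L w \<phi> \<longleftrightarrow> wf_fm L \<phi> \<and> freevars \<phi> \<subseteq> set w"

definition complete_type :: "('f,'r) lang \<Rightarrow> ('f,'r) fm set \<Rightarrow> nat list \<Rightarrow> ('f,'r) fm set \<Rightarrow> bool" where
  "complete_type L T w p \<longleftrightarrow> distinct w \<and> (\<forall>\<phi>\<in>p. fm_in L w \<phi>) \<and>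
     (\<exists>M :: (nat,'f,'r) strc. \<exists>as. models L T M \<and> (\<forall>\<phi>\<in>p. satt M \<phi> w as)) \<and>
     (\<forall>\<phi>. fm_in L w \<phi> \<longrightarrow> \<phi> \<in> p \<or> Neg \<phi> \<in> p)"

definition isolates :: "('f,'r) lang \<Rightarrow> ('f,'r) fm set \<Rightarrow> nat list \<Rightarrow> ('f,'r) fm \<Rightarrow> ('f,'r) fm set \<Rightarrow> bool" where
  "isolates L T w \<theta> p \<longleftrightarrow> fm_in L w \<theta> \<and>
     (\<exists>M :: (nat,'f,'r) strc. \<exists>as. models L T M \<and> satt M \<theta> w as) \<and>
     (\<forall>\<phi>\<in>p. entails L T (Imp \<theta> \<phi>))"

definition realizes :: "('a,'f,'r) strc \<Rightarrow> nat list \<Rightarrow> ('f,'r) fm set \<Rightarrow> bool" where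
  "realizes M w p \<longleftrightarrow> (\<exists>as. length as = length w \<and> set as \<subseteq> dom M \<and> (\<forall>\<phi>\<in>p. satt M \<phi> w as))"

definition atomic_model :: "('f,'r) lang \<Rightarrow> ('f,'r) fm set \<Rightarrow> ('a,'f,'r) strc \<Rightarrow> bool" where
  "atomic_model L T M \<longleftrightarrow> models L T M \<and>
     (\<forall>w as. distinct w \<and> length as = length w \<and> set as \<subseteq> dom M \<longrightarrow>
        (\<exists>\<theta>. fm_in L w \<theta> \<and> satt M \<theta> w as \<and>
             (\<forall>\<phi>. fm_in L w \<phi> \<and> satt M \<phi> w as \<longrightarrow> entails L T (Imp \<theta> \<phi>))))"

text \<open>Complete formula theta(w): isolates a complete type realized in an atomic model
  (a countable one, carrier in nat; every isolated type is realized in every atomic model).\<close>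
definition complete_formula :: "('f,'r) lang \<Rightarrow> ('f,'r) fm set \<Rightarrow> nat list \<Rightarrow> ('f,'r) fm \<Rightarrow> bool" where
  "complete_formula L T w \<theta> \<longleftrightarrow>
     (\<exists>p. complete_type L T w p \<and> isolates L T w \<theta> p \<and>
          (\<exists>M :: (nat,'f,'r) strc. atomic_model L T M \<and> realizes M w p))"

definition extendible :: "('f,'r) lang \<Rightarrow> ('f,'r) fm set \<Rightarrow> ('f,'r) fm \<Rightarrow> nat list \<Rightarrow> nat list \<Rightarrow> bool" where
  "extendible L T \<theta> z x \<longleftrightarrow> complete_formula L T (z @ x) \<theta> \<and>
     (\<exists>(M :: (nat,'f,'r) strc) N bs as. atomic_model L T M \<and> atomic_model L T N \<and> elem_sub L M N \<and>
        length bs = length z \<and> length as = length x \<and>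
        set bs \<subseteq> dom M \<and> set as \<subseteq> dom N - dom M \<and> satt N \<theta> (z @ x) (bs @ as))"

text \<open>theta is striated with respect to the partition of its variables into the blocks ys
  (length ys = n gives an n-striated formula).\<close>
definition striated :: "('f,'r) lang \<Rightarrow> ('f,'r) fm set \<Rightarrow> ('f,'r) fm \<Rightarrow> nat list list \<Rightarrow> bool" where
  "striated L T \<theta> ys \<longleftrightarrow> complete_formula L T (concat ys) \<theta> \<and>
     (\<forall>i. 0 < i \<and> i < length ys \<longrightarrow>
        extendible L T \<theta> (concat (take i ys)) (concat (drop i ys)))"

end

theory Submission
  imports Defs
begin

lemma eval_coinc:
  "(\<forall>v\<in>tvars t. e v = e' v) \<Longrightarrow> eval M e t = eval M e' t"
proof (induct t)
  case (Var x) then show ?case by simp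
next
  case (Fn f ts)
  then have h: "map (eval M e) ts = map (eval M e') ts" by auto
  show ?case by (simp only: eval.simps h)
qed

lemma sat_coinc:
  "(\<forall>v\<in>freevars \<phi>. e v = e' v) \<Longrightarrow> sat M e \<phi> = sat M e' \<phi>"
proof (induct \<phi> arbitrary: e e')
  case (Eq s t) then show ?case using eval_coinc[of s e e' M] eval_coinc[of t e e' M] by simp
next
  case (Rel r ts)
  then have h: "map (eval M e) ts = map (eval M e') ts" using eval_coinc by fastforce
  show ?case by (simp only: sat.simps h)
next
  case (Neg \<phi>) then show ?case by simp
next
  case (Conj \<phi> \<psi>)
  have "sat M e \<phi> = sat M e' \<phi>" using Conj.hyps(1) Conj.prems by simp
  moreover have "sat M e \<psi> = sat M e' \<psi>" using Conj.hyps(2) Conj.prems by simp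
  ultimately show ?case by simp
next
  case (Ex x \<phi>)
  have "\<And>a. sat M (e(x:=a)) \<phi> = sat M (e'(x:=a)) \<phi>"
    using Ex by (intro Ex.hyps) auto
  then show ?case by simp
qed

definition matches :: "(nat \<Rightarrow> 'a) \<Rightarrow> nat list \<Rightarrow> 'a list \<Rightarrow> bool" where
  "matches e w as \<longleftrightarrow> (\<forall>i<length w. e (w ! i) = as ! i)"

lemma satt_alt:
  "satt M \<theta> w as \<longleftrightarrow> length as = length w \<and> set as \<subseteq> dom M \<and>
     (\<forall>e. range e \<subseteq> dom M \<and> matches e w as \<longrightarrow> sat M e \<theta>)"
  unfolding satt_def matches_def by auto

lemma env_exists:
  assumes "distinct w" "length as = length w" "set as \<subseteq> dom M" "dom M \<noteq> {}"
  shows "\<exists>e. range e \<subseteq> dom M \<and> matches e w as"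
proof -
  obtain d where d: "d \<in> dom M" using assms(4) by blast
  define e where "e = (\<lambda>v. case map_of (zip w as) v of Some a \<Rightarrow> a | None \<Rightarrow> d)"
  have "range e \<subseteq> dom M"
  proof
    fix y assume "y \<in> range e"
    then obtain v where v: "y = e v" by blast
    show "y \<in> dom M"
    proof (cases "map_of (zip w as) v")
      case None then show ?thesis using v d e_def by simp
    next
      case (Some a)
      then have "(v,a) \<in> set (zip w as)" by (rule map_of_SomeD)
      then have "a \<in> set as" by (rule set_zip_rightD)
      then show ?thesis using v Some e_def assms(3) by auto
    qed
  qed
  moreover have "matches e w as"
  proof (unfold matches_def, intro allI impI)
    fix i assume "i < length w"
    then have "map_of (zip w as) (w!i) = Some (as!i)" using map_of_zip_nth assms by metis
    then show "e (w ! i) = as ! i" by (simp add: e_def)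
  qed
  ultimately show ?thesis by blast
qed

lemma matches_agree:
  "matches e w as \<Longrightarrow> matches e' w as \<Longrightarrow> v \<in> set w \<Longrightarrow> e v = e' v"
  unfolding matches_def by (metis in_set_conv_nth)

lemma satt_e0:
  assumes "length as = length w" "set as \<subseteq> dom M" "freevars \<phi> \<subseteq> set w"
    "range e0 \<subseteq> dom M" "matches e0 w as"
  shows "satt M \<phi> w as \<longleftrightarrow> sat M e0 \<phi>"
proof
  assume "satt M \<phi> w as" then show "sat M e0 \<phi>" using assms by (simp add: satt_alt)
next
  assume s: "sat M e0 \<phi>"
  have "sat M e \<phi>" if "range e \<subseteq> dom M" "matches e w as" for e
  proof -
    have "\<forall>v\<in>freevars \<phi>. e0 v = e v" using matches_agree[OF assms(5) that(2)] assms(3) by blast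
    then show ?thesis using s sat_coinc by metis
  qed
  then show "satt M \<phi> w as" using assms by (simp add: satt_alt)
qed

lemma satt_neg:
  assumes "distinct w" "length as = length w" "set as \<subseteq> dom M" "dom M \<noteq> {}"
    "freevars \<phi> \<subseteq> set w"
  shows "satt M (Neg \<phi>) w as \<longleftrightarrow> \<not> satt M \<phi> w as"
proof -
  obtain e where e: "range e \<subseteq> dom M" "matches e w as" using env_exists assms by blast
  show ?thesis using satt_e0[OF assms(2,3) _ e] assms(5) by simp
qed

lemma satt_mono:
  assumes "satt M \<phi> w' as'" "length as = length w" "set as \<subseteq> dom M"
    "\<And>e. matches e w as \<Longrightarrow> matches e w' as'"
  shows "satt M \<phi> w as"
  using assms by (auto simp: satt_alt)

lemma is_struct_ne: "is_struct L M \<Longrightarrow> dom M \<noteq> {}"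
  by (simp add: is_struct_def)

lemma models_ne: "models L T M \<Longrightarrow> dom M \<noteq> {}"
  by (simp add: models_def is_struct_def)

lemma entails_sat:
  "entails L T \<phi> \<Longrightarrow> models L T (M::(nat,'f,'r) strc) \<Longrightarrow> range e \<subseteq> dom M \<Longrightarrow> sat M e \<phi>"
  by (simp add: entails_def)

lemma sat_Imp: "sat M e (Imp a b) \<longleftrightarrow> (sat M e a \<longrightarrow> sat M e b)"
  by (simp add: Imp_def)

lemma sat_Iff: "sat M e (Iff a b) \<longleftrightarrow> (sat M e a \<longleftrightarrow> sat M e b)"
  by (auto simp add: Iff_def Imp_def)

lemma freevars_Imp[simp]: "freevars (Imp a b) = freevars a \<union> freevars b"
  by (simp add: Imp_def)
lemma wf_Imp[simp]: "wf_fm L (Imp a b) = (wf_fm L a \<and> wf_fm L b)"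
  by (simp add: Imp_def)

lemma entails_satt:
  assumes "entails L T (Imp \<theta> \<phi>)" "models L T (M::(nat,'f,'r) strc)" "satt M \<theta> w as"
  shows "satt M \<phi> w as"
  using assms by (auto simp: satt_alt sat_Imp entails_def)

lemma range_inv_into: assumes "range e \<subseteq> h ` A" shows "range (inv_into A h \<circ> e) \<subseteq> A"
proof (rule subsetI)
  fix y assume "y \<in> range (inv_into A h \<circ> e)"
  then obtain x where y: "y = inv_into A h (e x)" by auto
  have "e x \<in> h ` A" using assms by auto
  then show "y \<in> A" using y by (simp add: inv_into_into)
qed

lemma comp_inv_into: assumes "range e \<subseteq> h ` A" shows "h \<circ> (inv_into A h \<circ> e) = e"
proof (rule ext)
  fix x
  have "e x \<in> h ` A" using assms by auto
  then show "(h \<circ> (inv_into A h \<circ> e)) x = e x" by (simp add: f_inv_into_f)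
qed

lemma list_preimage:
  "set bs \<subseteq> h ` A \<Longrightarrow> bs = map h (map (inv_into A h) bs) \<and> set (map (inv_into A h) bs) \<subseteq> A"
  by (induct bs) (auto simp: f_inv_into_f inv_into_into)

definition iso_on :: "('f,'r) lang \<Rightarrow> ('a \<Rightarrow> 'b) \<Rightarrow> ('a,'f,'r) strc \<Rightarrow> ('b,'f,'r) strc \<Rightarrow> bool" where
  "iso_on L h M N \<longleftrightarrow> inj_on h (dom M) \<and> h ` dom M = dom N \<and> is_struct L M \<and>
    (\<forall>f as. length as = farity L f \<and> set as \<subseteq> dom M \<longrightarrow> h (fint M f as) = fint N f (map h as)) \<and>
    (\<forall>r as. length as = rarity L r \<and> set as \<subseteq> dom M \<longrightarrow> rint N r (map h as) = rint M r as)"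

lemma iso_eval:
  assumes "iso_on L h M N" "range e \<subseteq> dom M"
  shows "wf_trm L t \<Longrightarrow> eval M e t \<in> dom M \<and> h (eval M e t) = eval N (h \<circ> e) t"
proof (induct t)
  case (Var x) then show ?case using assms by auto
next
  case (Fn f ts)
  then have IH: "\<And>t. t \<in> set ts \<Longrightarrow> eval M e t \<in> dom M \<and> h (eval M e t) = eval N (h \<circ> e) t"
    and len: "length ts = farity L f" by (auto simp: comp_def)
  have s: "set (map (eval M e) ts) \<subseteq> dom M" using IH by auto
  have l: "length (map (eval M e) ts) = farity L f" using len by simp
  have m: "map (eval N (h \<circ> e)) ts = map h (map (eval M e) ts)" using IH by (simp add: comp_def)
  have st: "is_struct L M" using assms(1) by (simp add: iso_on_def)
  have "fint M f (map (eval M e) ts) \<in> dom M" using st s l by (simp add: is_struct_def)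
  moreover have "h (fint M f (map (eval M e) ts)) = fint N f (map h (map (eval M e) ts))"
    using assms(1) s l by (simp add: iso_on_def)
  ultimately show ?case by (simp only: eval.simps m)
qed

lemma iso_sat:
  assumes "iso_on L h M N"
  shows "wf_fm L \<phi> \<Longrightarrow> range e \<subseteq> dom M \<Longrightarrow> sat N (h \<circ> e) \<phi> = sat M e \<phi>"
proof (induct \<phi> arbitrary: e)
  case (Eq s t)
  have inj: "inj_on h (dom M)" using assms by (simp add: iso_on_def)
  have m: "eval M e s \<in> dom M" "eval M e t \<in> dom M"
    and e1: "eval N (h \<circ> e) s = h (eval M e s)" and e2: "eval N (h \<circ> e) t = h (eval M e t)"
    using iso_eval[OF assms Eq(2)] Eq(1) by auto
  show ?case by (simp only: sat.simps e1 e2 inj_on_eq_iff[OF inj m])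
next
  case (Rel r ts)
  have IH: "\<And>t. t \<in> set ts \<Longrightarrow> eval M e t \<in> dom M \<and> h (eval M e t) = eval N (h \<circ> e) t"
    using iso_eval[OF assms Rel(2)] Rel(1) by auto
  have s: "set (map (eval M e) ts) \<subseteq> dom M" using IH by auto
  have l: "length (map (eval M e) ts) = rarity L r" using Rel(1) by simp
  have m: "map (eval N (h \<circ> e)) ts = map h (map (eval M e) ts)" using IH by (simp add: comp_def)
  have "rint N r (map h (map (eval M e) ts)) = rint M r (map (eval M e) ts)"
    using assms s l unfolding iso_on_def by blast
  then show ?case by (simp only: sat.simps m)
next
  case (Neg \<phi>) then show ?case by simp
next
  case (Conj \<phi> \<psi>) then show ?case by simp
next
  case (Ex x \<phi>)
  have dN: "dom N = h ` dom M" using assms by (simp add: iso_on_def)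
  have "(\<exists>b\<in>dom N. sat N ((h \<circ> e)(x := b)) \<phi>) = (\<exists>a\<in>dom M. sat N ((h \<circ> e)(x := h a)) \<phi>)"
    using dN by auto
  also have "\<dots> = (\<exists>a\<in>dom M. sat M (e(x := a)) \<phi>)"
  proof -
    have "\<And>a. a \<in> dom M \<Longrightarrow> sat N ((h \<circ> e)(x := h a)) \<phi> = sat M (e(x := a)) \<phi>"
    proof -
      fix a assume a: "a \<in> dom M"
      have eq: "(h \<circ> e)(x := h a) = h \<circ> (e(x := a))" by auto
      have r: "range (e(x := a)) \<subseteq> dom M" using a Ex(3) by auto
      have wf: "wf_fm L \<phi>" using Ex(2) by simp
      have "sat N (h \<circ> (e(x := a))) \<phi> = sat M (e(x := a)) \<phi>" by (rule Ex.hyps[OF wf r])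
      then show "sat N ((h \<circ> e)(x := h a)) \<phi> = sat M (e(x := a)) \<phi>" by (simp only: eq)
    qed
    then show ?thesis by auto
  qed
  finally show ?case by (simp only: sat.simps)
qed

lemma iso_sat':
  assumes "iso_on L h M N" "wf_fm L \<phi>" "range e' \<subseteq> dom N"
  shows "sat N e' \<phi> = sat M (inv_into (dom M) h \<circ> e') \<phi>"
proof -
  have dN: "dom N = h ` dom M" using assms by (simp add: iso_on_def)
  have r: "range (inv_into (dom M) h \<circ> e') \<subseteq> dom M"
    using assms(3) dN range_inv_into by metis
  have "h \<circ> (inv_into (dom M) h \<circ> e') = e'"
    using assms(3) dN comp_inv_into by metis
  then show ?thesis using iso_sat[OF assms(1) assms(2) r] by simp
qed

lemma iso_struct:
  assumes "iso_on L h M N" shows "is_struct L N"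
proof -
  have st: "is_struct L M" and dN: "dom N = h ` dom M" using assms by (auto simp: iso_on_def)
  have "fint N f bs \<in> dom N" if "length bs = farity L f" "set bs \<subseteq> dom N" for f bs
  proof -
    have "set bs \<subseteq> h ` dom M" using that dN by simp
    then obtain as where as: "bs = map h as" "set as \<subseteq> dom M"
      using list_preimage by blast
    then have "h (fint M f as) = fint N f bs" using assms that by (simp add: iso_on_def)
    moreover have "fint M f as \<in> dom M" using st as that by (simp add: is_struct_def)
    ultimately show ?thesis using dN by (metis imageI)
  qed
  moreover have "dom N \<noteq> {}" using st dN by (simp add: is_struct_def)
  ultimately show ?thesis by (simp add: is_struct_def)
qed

lemma iso_models:
  assumes "iso_on L h M N" "models L T M" "\<forall>\<phi>\<in>T. wf_fm L \<phi>"
  shows "models L T N"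
proof -
  have dN: "dom N = h ` dom M" using assms by (simp add: iso_on_def)
  have "sat N e \<phi>" if "\<phi> \<in> T" "range e \<subseteq> dom N" for \<phi> e
  proof -
    have r: "range (inv_into (dom M) h \<circ> e) \<subseteq> dom M"
      using that(2) dN range_inv_into by metis
    have "sat M (inv_into (dom M) h \<circ> e) \<phi>" using assms(2) that(1) r by (simp add: models_def)
    then show ?thesis using iso_sat'[OF assms(1) _ that(2)] assms(3) that(1) by simp
  qed
  then show ?thesis using iso_struct[OF assms(1)] by (simp add: models_def)
qed

lemma iso_satt:
  assumes "iso_on L h M N" "wf_fm L \<phi>" "length as = length w" "set as \<subseteq> dom M"
  shows "satt N \<phi> w (map h as) = satt M \<phi> w as"
proof -
  have dN: "dom N = h ` dom M" and inj: "inj_on h (dom M)" using assms by (auto simp: iso_on_def)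
  have ms: "set (map h as) \<subseteq> dom N" using assms(4) dN by auto
  show ?thesis
  proof
    assume s: "satt N \<phi> w (map h as)"
    show "satt M \<phi> w as" unfolding satt_alt
    proof (intro conjI allI impI)
      show "length as = length w" by (rule assms(3))
      show "set as \<subseteq> dom M" by (rule assms(4))
      fix e assume e: "range e \<subseteq> dom M \<and> matches e w as"
      have "range (h \<circ> e) \<subseteq> dom N" using e dN by auto
      moreover have "matches (h \<circ> e) w (map h as)" using e assms(3) by (simp add: matches_def)
      ultimately have "sat N (h \<circ> e) \<phi>" using s by (simp add: satt_alt)
      then show "sat M e \<phi>" using iso_sat[OF assms(1,2)] e by simp
    qed
  next
    assume s: "satt M \<phi> w as"
    show "satt N \<phi> w (map h as)" unfolding satt_alt
    proof (intro conjI allI impI)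
      show "length (map h as) = length w" using assms by simp
      show "set (map h as) \<subseteq> dom N" by (rule ms)
      fix e' assume e': "range e' \<subseteq> dom N \<and> matches e' w (map h as)"
      let ?e = "inv_into (dom M) h \<circ> e'"
      have r: "range ?e \<subseteq> dom M" using e' dN range_inv_into by metis
      have "matches ?e w as" unfolding matches_def
      proof (intro allI impI)
        fix i assume i: "i < length w"
        have "e' (w ! i) = h (as ! i)" using e' i assms(3) by (simp add: matches_def)
        moreover have "as ! i \<in> dom M" using i assms(3,4) nth_mem by (metis subsetD)
        ultimately show "?e (w ! i) = as ! i" using inj by (simp add: inv_into_f_f)
      qed
      then have "sat M ?e \<phi>" using s r by (simp add: satt_alt)
      then show "sat N e' \<phi>" using iso_sat'[OF assms(1,2)] e' by simp
    qed
  qed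
qed

lemma iso_atomic:
  assumes "iso_on L h M N" "atomic_model L T M" "\<forall>\<phi>\<in>T. wf_fm L \<phi>"
  shows "atomic_model L T N"
  unfolding atomic_model_def
proof (intro conjI allI impI)
  show "models L T N" using iso_models assms by (auto simp: atomic_model_def)
  fix w :: "nat list" and bs assume wb: "distinct w \<and> length bs = length w \<and> set bs \<subseteq> dom N"
  have dN: "dom N = h ` dom M" and inj: "inj_on h (dom M)" using assms by (auto simp: iso_on_def)
  obtain as where as: "bs = map h as" "set as \<subseteq> dom M"
    using wb dN list_preimage by metis
  have la: "length as = length w" using as wb by simp
  obtain \<theta> where th: "fm_in L w \<theta>" "satt M \<theta> w as"
    "\<forall>\<phi>. fm_in L w \<phi> \<and> satt M \<phi> w as \<longrightarrow> entails L T (Imp \<theta> \<phi>)"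
  proof -
    have "models L T M \<and> (\<forall>w as. distinct w \<and> length as = length w \<and> set as \<subseteq> dom M \<longrightarrow>
        (\<exists>\<theta>. fm_in L w \<theta> \<and> satt M \<theta> w as \<and>
             (\<forall>\<phi>. fm_in L w \<phi> \<and> satt M \<phi> w as \<longrightarrow> entails L T (Imp \<theta> \<phi>))))"
      using assms(2) by (simp add: atomic_model_def)
    then show ?thesis using that wb la as(2) by blast
  qed
  have wf: "wf_fm L \<theta>" using th(1) by (simp add: fm_in_def)
  have s1: "satt N \<theta> w bs" using iso_satt[OF assms(1) wf la as(2)] th(2) as(1) by simp
  have s2: "entails L T (Imp \<theta> \<phi>)" if "fm_in L w \<phi>" "satt N \<phi> w bs" for \<phi>
  proof -
    have "wf_fm L \<phi>" using that(1) by (simp add: fm_in_def)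
    then have "satt M \<phi> w as" using iso_satt[OF assms(1) _ la as(2)] that(2) as(1) by simp
    then show ?thesis using th(3) that(1) by blast
  qed
  show "\<exists>\<theta>. fm_in L w \<theta> \<and> satt N \<theta> w bs \<and>
             (\<forall>\<phi>. fm_in L w \<phi> \<and> satt N \<phi> w bs \<longrightarrow> entails L T (Imp \<theta> \<phi>))"
    using th(1) s1 s2 by blast
qed

definition img :: "('a \<Rightarrow> 'b) \<Rightarrow> ('a,'f,'r) strc \<Rightarrow> ('b,'f,'r) strc" where
  "img g M = \<lparr>dom = g ` dom M,
     fint = (\<lambda>f bs. g (fint M f (map (inv_into (dom M) g) bs))),
     rint = (\<lambda>r bs. rint M r (map (inv_into (dom M) g) bs))\<rparr>"

lemma dom_img[simp]: "dom (img g M) = g ` dom M"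
  by (simp add: img_def)

lemma iso_img:
  assumes "inj_on g (dom M)" "is_struct L M"
  shows "iso_on L g M (img g M)"
proof -
  have "map (inv_into (dom M) g) (map g as) = as" if "set as \<subseteq> dom M" for as
    using that assms(1) by (induct as) (auto simp: inv_into_f_f)
  then show ?thesis using assms unfolding iso_on_def by (simp add: img_def)
qed

lemma elem_sub_refl: "is_struct L M \<Longrightarrow> elem_sub L M M"
  by (simp add: elem_sub_def)

lemma elem_sub_trans: "elem_sub L M N \<Longrightarrow> elem_sub L N P \<Longrightarrow> elem_sub L M P"
  unfolding elem_sub_def by (meson order_trans)

lemma elem_sub_dom: "elem_sub L M N \<Longrightarrow> dom M \<subseteq> dom N"
  by (simp add: elem_sub_def)

lemma elem_sub_img:
  assumes "elem_sub L M N" "inj_on g (dom N)"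
  shows "elem_sub L (img g M) (img g N)"
proof -
  have sM: "is_struct L M" and sN: "is_struct L N" and d: "dom M \<subseteq> dom N"
    using assms by (auto simp: elem_sub_def)
  have iM: "inj_on g (dom M)" using assms(2) d inj_on_subset by blast
  have isoM: "iso_on L g M (img g M)" by (rule iso_img[OF iM sM])
  have isoN: "iso_on L g N (img g N)" by (rule iso_img[OF assms(2) sN])
  have "sat (img g M) e \<phi> = sat (img g N) e \<phi>"
    if "wf_fm L \<phi>" "range e \<subseteq> g ` dom M" for \<phi> e
  proof -
    let ?e = "inv_into (dom M) g \<circ> e"
    have r: "range ?e \<subseteq> dom M" using that range_inv_into by metis
    have ge: "g \<circ> ?e = e" using that comp_inv_into by metis
    have "sat (img g M) (g \<circ> ?e) \<phi> = sat M ?e \<phi>" using iso_sat[OF isoM that(1) r] .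
    also have "\<dots> = sat N ?e \<phi>" using assms(1) that(1) r by (simp add: elem_sub_def)
    also have "\<dots> = sat (img g N) (g \<circ> ?e) \<phi>" using iso_sat[OF isoN that(1)] r d by auto
    finally show ?thesis using ge by simp
  qed
  then show ?thesis using iso_struct[OF isoM] iso_struct[OF isoN] d
    by (auto simp: elem_sub_def)
qed

lemma img_equiv:
  assumes "iso_on L g M N"
  shows "elem_sub L (img g M) N \<and> elem_sub L N (img g M)"
proof -
  have iM: "inj_on g (dom M)" and sM: "is_struct L M" and dN: "dom N = g ` dom M"
    using assms by (auto simp: iso_on_def)
  have isoM: "iso_on L g M (img g M)" by (rule iso_img[OF iM sM])
  have "sat (img g M) e \<phi> = sat N e \<phi>"
    if "wf_fm L \<phi>" "range e \<subseteq> g ` dom M" for \<phi> e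
  proof -
    let ?e = "inv_into (dom M) g \<circ> e"
    have r: "range ?e \<subseteq> dom M" using that range_inv_into by metis
    have ge: "g \<circ> ?e = e" using that comp_inv_into by metis
    have "sat (img g M) (g \<circ> ?e) \<phi> = sat M ?e \<phi>" using iso_sat[OF isoM that(1) r] .
    also have "\<dots> = sat N (g \<circ> ?e) \<phi>" using iso_sat[OF assms that(1) r] by simp
    finally show ?thesis using ge by simp
  qed
  then show ?thesis using iso_struct[OF isoM] iso_struct[OF assms] dN
    by (auto simp: elem_sub_def)
qed

lemma elem_sub_satt:
  assumes "elem_sub L M N" "fm_in L w \<phi>" "distinct w" "length as = length w" "set as \<subseteq> dom M"
  shows "satt M \<phi> w as \<longleftrightarrow> satt N \<phi> w as"
proof -
  have sM: "is_struct L M" and d: "dom M \<subseteq> dom N" using assms by (auto simp: elem_sub_def)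
  obtain e where e: "range e \<subseteq> dom M" "matches e w as"
    using env_exists[OF assms(3,4,5) is_struct_ne[OF sM]] by blast
  have fv: "freevars \<phi> \<subseteq> set w" and wf: "wf_fm L \<phi>" using assms(2) by (auto simp: fm_in_def)
  have "satt M \<phi> w as \<longleftrightarrow> sat M e \<phi>" using satt_e0[OF assms(4,5) fv e] .
  also have "\<dots> \<longleftrightarrow> sat N e \<phi>" using assms(1) wf e by (simp add: elem_sub_def)
  also have "\<dots> \<longleftrightarrow> satt N \<phi> w as" using satt_e0[OF assms(4) _ fv _ e(2)] assms(5) e(1) d by auto
  finally show ?thesis .
qed

lemma Exs_Nil[simp]: "Exs [] \<phi> = \<phi>" by (simp add: Exs_def)
lemma Exs_Cons[simp]: "Exs (v#vs) \<phi> = Ex v (Exs vs \<phi>)" by (simp add: Exs_def)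

lemma freevars_Exs: "freevars (Exs x \<phi>) = freevars \<phi> - set x"
  by (induct x) auto

lemma wf_Exs[simp]: "wf_fm L (Exs x \<phi>) = wf_fm L \<phi>"
  by (induct x) auto

fun upds :: "(nat \<Rightarrow> 'a) \<Rightarrow> nat list \<Rightarrow> 'a list \<Rightarrow> (nat \<Rightarrow> 'a)" where
  "upds e (v#vs) (d#ds) = upds (e(v:=d)) vs ds"
| "upds e _ _ = e"

lemma sat_Exs:
  "sat M e (Exs x \<phi>) \<longleftrightarrow> (\<exists>ds. length ds = length x \<and> set ds \<subseteq> dom M \<and> sat M (upds e x ds) \<phi>)"
proof (induct x arbitrary: e)
  case Nil then show ?case by simp
next
  case (Cons v vs)
  have "sat M e (Exs (v#vs) \<phi>) \<longleftrightarrow> (\<exists>d\<in>dom M. \<exists>ds. length ds = length vs \<and> set ds \<subseteq> dom M \<and>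
      sat M (upds (e(v:=d)) vs ds) \<phi>)" by (simp only: Exs_Cons sat.simps Cons)
  also have "\<dots> \<longleftrightarrow> (\<exists>ds. length ds = length (v#vs) \<and> set ds \<subseteq> dom M \<and> sat M (upds e (v#vs) ds) \<phi>)"
  proof
    assume "\<exists>d\<in>dom M. \<exists>ds. length ds = length vs \<and> set ds \<subseteq> dom M \<and> sat M (upds (e(v:=d)) vs ds) \<phi>"
    then obtain d ds where "d \<in> dom M" "length ds = length vs" "set ds \<subseteq> dom M"
      "sat M (upds (e(v:=d)) vs ds) \<phi>" by blast
    then show "\<exists>ds. length ds = length (v#vs) \<and> set ds \<subseteq> dom M \<and> sat M (upds e (v#vs) ds) \<phi>"
      by (intro exI[of _ "d#ds"]) simp
  next
    assume "\<exists>ds. length ds = length (v#vs) \<and> set ds \<subseteq> dom M \<and> sat M (upds e (v#vs) ds) \<phi>"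
    then obtain ds where ds: "length ds = length (v#vs)" "set ds \<subseteq> dom M" "sat M (upds e (v#vs) ds) \<phi>"
      by blast
    then obtain d ds' where "ds = d # ds'" by (cases ds) auto
    then show "\<exists>d\<in>dom M. \<exists>ds. length ds = length vs \<and> set ds \<subseteq> dom M \<and> sat M (upds (e(v:=d)) vs ds) \<phi>"
      using ds by auto
  qed
  finally show ?case .
qed

lemma upds_other: "v \<notin> set x \<Longrightarrow> upds e x ds v = e v"
proof (induct x arbitrary: e ds)
  case Nil then show ?case by simp
next
  case (Cons a x) then show ?case by (cases ds) auto
qed

lemma upds_nth: "distinct x \<Longrightarrow> length ds = length x \<Longrightarrow> i < length x \<Longrightarrow> upds e x ds (x!i) = ds!i"
proof (induct x arbitrary: e ds i)
  case Nil then show ?case by simp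
next
  case (Cons a x)
  then obtain d ds' where ds: "ds = d # ds'" by (cases ds) auto
  show ?case
  proof (cases i)
    case 0 then show ?thesis using Cons ds by (simp add: upds_other)
  next
    case (Suc j) then show ?thesis using Cons ds by simp
  qed
qed

lemma upds_range: "range e \<subseteq> D \<Longrightarrow> set ds \<subseteq> D \<Longrightarrow> range (upds e x ds) \<subseteq> D"
proof (induct x arbitrary: e ds)
  case Nil then show ?case by simp
next
  case (Cons a x)
  show ?case
  proof (cases ds)
    case Nil then show ?thesis using Cons by simp
  next
    case (Cons d ds')
    have "range (e(a:=d)) \<subseteq> D" using Cons Cons.prems by auto
    moreover have "set ds' \<subseteq> D" using Cons Cons.prems by auto
    ultimately show ?thesis using Cons Cons.hyps by simp
  qed
qed

lemma matches_upds:
  assumes "matches e u c" "distinct (u@x)" "length ds = length x" "length c = length u"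
  shows "matches (upds e x ds) (u@x) (c@ds)"
  unfolding matches_def
proof (intro allI impI)
  fix i assume i: "i < length (u@x)"
  show "upds e x ds ((u@x) ! i) = (c@ds) ! i"
  proof (cases "i < length u")
    case True
    then have "u ! i \<notin> set x" using assms(2) by (auto dest: nth_mem)
    then show ?thesis using True assms(1,4) by (simp add: nth_append upds_other matches_def)
  next
    case False
    then show ?thesis using i assms(2,3,4) by (simp add: nth_append upds_nth)
  qed
qed

lemma matches_prefix: "matches e (u@x) (c@ds) \<Longrightarrow> length c = length u \<Longrightarrow> matches e u c"
  unfolding matches_def by (metis nth_append trans_less_add1 length_append)

lemma satt_Exs_D:
  assumes "satt M (Exs x \<phi>) u c" "distinct (u@x)" "dom M \<noteq> {}" "freevars \<phi> \<subseteq> set (u@x)"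
  shows "\<exists>ds. length ds = length x \<and> set ds \<subseteq> dom M \<and> satt M \<phi> (u@x) (c@ds)"
proof -
  have lc: "length c = length u" and sc: "set c \<subseteq> dom M" using assms(1) by (auto simp: satt_alt)
  obtain e where e: "range e \<subseteq> dom M" "matches e u c"
    using env_exists[OF _ lc sc assms(3)] assms(2) by auto
  have "sat M e (Exs x \<phi>)" using assms(1) e by (simp add: satt_alt)
  then obtain ds where ds: "length ds = length x" "set ds \<subseteq> dom M" "sat M (upds e x ds) \<phi>"
    by (auto simp: sat_Exs)
  have m: "matches (upds e x ds) (u@x) (c@ds)" using matches_upds[OF e(2) assms(2) ds(1) lc] .
  have r: "range (upds e x ds) \<subseteq> dom M" using upds_range[OF e(1) ds(2)] .
  have "satt M \<phi> (u@x) (c@ds)"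
    using satt_e0[of "c@ds" "u@x" M \<phi> "upds e x ds"] lc ds sc assms(4) m r by simp
  then show ?thesis using ds by blast
qed

lemma satt_Exs_I:
  assumes "satt M \<phi> (u@x) (c@ds)" "distinct (u@x)" "length ds = length x" "length c = length u"
  shows "satt M (Exs x \<phi>) u c"
proof -
  have sc: "set c \<subseteq> dom M" and sd: "set ds \<subseteq> dom M" using assms(1) by (auto simp: satt_alt)
  have "sat M e (Exs x \<phi>)" if "range e \<subseteq> dom M" "matches e u c" for e
  proof -
    have "sat M (upds e x ds) \<phi>"
      using assms(1) upds_range[OF that(1) sd] matches_upds[OF that(2) assms(2,3,4)]
      by (simp add: satt_alt)
    then show ?thesis using sd assms(3) by (auto simp: sat_Exs)
  qed
  then show ?thesis using sc assms(4) by (simp add: satt_alt)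
qed

lemma satt_append:
  assumes "distinct (u@x)" "length c = length u" "length ds = length x"
    "set c \<subseteq> dom M" "set ds \<subseteq> dom M" "dom M \<noteq> {}" "freevars \<phi> \<subseteq> set u"
  shows "satt M \<phi> (u@x) (c@ds) \<longleftrightarrow> satt M \<phi> u c"
proof -
  obtain e where e: "range e \<subseteq> dom M" "matches e (u@x) (c@ds)"
    using env_exists[of "u@x" "c@ds" M] assms by auto
  have e2: "matches e u c" using matches_prefix[OF e(2) assms(2)] .
  have "satt M \<phi> (u@x) (c@ds) \<longleftrightarrow> sat M e \<phi>"
    using satt_e0[of "c@ds" "u@x" M \<phi> e] assms e by auto
  also have "\<dots> \<longleftrightarrow> satt M \<phi> u c" using satt_e0[of c u M \<phi> e] assms e(1) e2 by auto
  finally show ?thesis .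
qed

lemma cf_basic:
  assumes "complete_formula L T w \<theta>"
  obtains p where "complete_type L T w p" "isolates L T w \<theta> p"
    "\<exists>M :: (nat,'f,'r) strc. atomic_model L T M \<and> realizes M w p"
  using assms unfolding complete_formula_def by blast

lemma cf_distinct: "complete_formula L T w \<theta> \<Longrightarrow> distinct w"
  by (auto simp: complete_formula_def complete_type_def)

lemma cf_fm_in: "complete_formula L T w \<theta> \<Longrightarrow> fm_in L w \<theta>"
  by (auto simp: complete_formula_def isolates_def)

lemma CF:
  fixes M N :: "(nat,'f,'r) strc"
  assumes "complete_formula L T w \<theta>" "models L T M" "models L T N"
    "satt M \<theta> w as" "satt N \<theta> w bs" "fm_in L w \<phi>"
  shows "satt M \<phi> w as \<longleftrightarrow> satt N \<phi> w bs"
proof -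
  obtain p where p: "complete_type L T w p" "isolates L T w \<theta> p" using cf_basic[OF assms(1)] by blast
  have dw: "distinct w" using p(1) by (simp add: complete_type_def)
  have fv: "freevars \<phi> \<subseteq> set w" using assms(6) by (simp add: fm_in_def)
  have la: "length as = length w" "set as \<subseteq> dom M" using assms(4) by (auto simp: satt_alt)
  have lb: "length bs = length w" "set bs \<subseteq> dom N" using assms(5) by (auto simp: satt_alt)
  have "\<phi> \<in> p \<or> Neg \<phi> \<in> p" using p(1) assms(6) by (simp add: complete_type_def)
  then show ?thesis
  proof
    assume "\<phi> \<in> p"
    then have "entails L T (Imp \<theta> \<phi>)" using p(2) by (simp add: isolates_def)
    then show ?thesis using entails_satt assms by metis
  next
    assume "Neg \<phi> \<in> p"
    then have "entails L T (Imp \<theta> (Neg \<phi>))" using p(2) by (simp add: isolates_def)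
    then have "satt M (Neg \<phi>) w as" "satt N (Neg \<phi>) w bs" using entails_satt assms by metis+
    then show ?thesis using satt_neg[OF dw la _ fv] satt_neg[OF dw lb _ fv]
      models_ne[OF assms(2)] models_ne[OF assms(3)] by simp
  qed
qed

lemma CF_prefix:
  fixes M N :: "(nat,'f,'r) strc"
  assumes "complete_formula L T (u@x) \<theta>" "models L T M" "models L T N"
    "satt M \<theta> (u@x) (a1@a2)" "satt N \<theta> (u@x) (b1@b2)" "length a1 = length u" "length b1 = length u"
    "fm_in L u \<phi>"
  shows "satt M \<phi> u a1 \<longleftrightarrow> satt N \<phi> u b1"
proof -
  have d: "distinct (u@x)" using cf_distinct[OF assms(1)] .
  have a: "length a2 = length x" "set a1 \<subseteq> dom M" "set a2 \<subseteq> dom M" using assms(4,6) by (auto simp: satt_alt)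
  have b: "length b2 = length x" "set b1 \<subseteq> dom N" "set b2 \<subseteq> dom N" using assms(5,7) by (auto simp: satt_alt)
  have fv: "freevars \<phi> \<subseteq> set u" using assms(8) by (simp add: fm_in_def)
  have f2: "fm_in L (u@x) \<phi>" using assms(8) by (auto simp: fm_in_def)
  have "satt M \<phi> u a1 \<longleftrightarrow> satt M \<phi> (u@x) (a1@a2)"
    using satt_append[OF d assms(6) a(1) a(2) a(3) models_ne[OF assms(2)] fv] by simp
  also have "\<dots> \<longleftrightarrow> satt N \<phi> (u@x) (b1@b2)" using CF[OF assms(1,2,3,4,5) f2] .
  also have "\<dots> \<longleftrightarrow> satt N \<phi> u b1"
    using satt_append[OF d assms(7) b(1) b(2) b(3) models_ne[OF assms(3)] fv] by simp
  finally show ?thesis .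
qed

lemma cf_realized:
  assumes "complete_formula L T w \<theta>"
  shows "\<exists>(M :: (nat,'f,'r) strc) as. atomic_model L T M \<and> satt M \<theta> w as"
proof -
  obtain p where p: "complete_type L T w p" "isolates L T w \<theta> p"
    and "\<exists>M :: (nat,'f,'r) strc. atomic_model L T M \<and> realizes M w p" using cf_basic[OF assms] by blast
  then obtain M :: "(nat,'f,'r) strc" and as where M: "atomic_model L T M" "length as = length w"
    "set as \<subseteq> dom M" "\<forall>\<phi>\<in>p. satt M \<phi> w as" unfolding realizes_def by blast
  have dw: "distinct w" using p(1) by (simp add: complete_type_def)
  have fi: "fm_in L w \<theta>" using p(2) by (simp add: isolates_def)
  have "\<theta> \<in> p"
  proof (rule ccontr)
    assume "\<theta> \<notin> p"
    then have "Neg \<theta> \<in> p" using p(1) fi unfolding complete_type_def by blast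
    then have en: "entails L T (Imp \<theta> (Neg \<theta>))" using p(2) by (simp add: isolates_def)
    obtain M' :: "(nat,'f,'r) strc" and bs where M': "models L T M'" "satt M' \<theta> w bs"
      using p(2) by (auto simp: isolates_def)
    have "satt M' (Neg \<theta>) w bs" using entails_satt[OF en M'] .
    moreover have "length bs = length w" "set bs \<subseteq> dom M'" using M'(2) by (auto simp: satt_alt)
    ultimately show False using satt_neg[OF dw _ _ models_ne[OF M'(1)]] fi M'(2)
      by (auto simp: fm_in_def)
  qed
  then show ?thesis using M by blast
qed

lemma ISOL:
  fixes M :: "(nat,'f,'r) strc"
  assumes "atomic_model L T M" "distinct w" "length as = length w" "set as \<subseteq> dom M"
  shows "\<exists>\<psi>. complete_formula L T w \<psi> \<and> satt M \<psi> w as \<and>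
     (\<forall>\<phi>. fm_in L w \<phi> \<and> satt M \<phi> w as \<longrightarrow> entails L T (Imp \<psi> \<phi>))"
proof -
  have mo: "models L T M" using assms(1) by (simp add: atomic_model_def)
  obtain \<theta> where th: "fm_in L w \<theta>" "satt M \<theta> w as"
    "\<forall>\<phi>. fm_in L w \<phi> \<and> satt M \<phi> w as \<longrightarrow> entails L T (Imp \<theta> \<phi>)"
    using assms unfolding atomic_model_def by blast
  define p where "p = {\<phi>. fm_in L w \<phi> \<and> satt M \<phi> w as}"
  have ct: "complete_type L T w p"
    unfolding complete_type_def
  proof (intro conjI allI impI)
    show "distinct w" by fact
    show "\<forall>\<phi>\<in>p. fm_in L w \<phi>" by (simp add: p_def)
    show "\<exists>M :: (nat,'f,'r) strc. \<exists>as. models L T M \<and> (\<forall>\<phi>\<in>p. satt M \<phi> w as)"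
      using mo by (auto simp: p_def)
    fix \<phi> assume f: "fm_in L w \<phi>"
    then have "fm_in L w (Neg \<phi>)" by (simp add: fm_in_def)
    then show "\<phi> \<in> p \<or> Neg \<phi> \<in> p"
      using satt_neg[OF assms(2,3,4) models_ne[OF mo]] f by (auto simp: p_def fm_in_def)
  qed
  have iso: "isolates L T w \<theta> p"
    unfolding isolates_def using th mo by (auto simp: p_def)
  have "realizes M w p" unfolding realizes_def using assms by (auto simp: p_def)
  then have "complete_formula L T w \<theta>" unfolding complete_formula_def using ct iso assms(1) by blast
  then show ?thesis using th by blast
qed

definition vbase :: "nat list \<Rightarrow> nat" where
  "vbase w = Suc (Max (insert 0 (set w)))"

definition vsq :: "nat list \<Rightarrow> nat \<Rightarrow> nat list" where
  "vsq w k = w @ map (\<lambda>i. vbase w + i) [0..<k]"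

lemma vbase_gt: "x \<in> set w \<Longrightarrow> x < vbase w"
  unfolding vbase_def by (simp add: le_imp_less_Suc)

lemma vsq_0[simp]: "vsq w 0 = w" by (simp add: vsq_def)
lemma vsq_Suc: "vsq w (Suc k) = vsq w k @ [vbase w + k]" by (simp add: vsq_def)
lemma length_vsq[simp]: "length (vsq w k) = length w + k" by (simp add: vsq_def)

lemma distinct_vsq: "distinct w \<Longrightarrow> distinct (vsq w k)"
  unfolding vsq_def using vbase_gt by (fastforce simp: distinct_map inj_on_def)

definition Pt :: "('f,'r) lang \<Rightarrow> (nat,'f,'r) strc \<Rightarrow> (nat,'f,'r) strc \<Rightarrow> nat list \<Rightarrow> nat \<Rightarrow> nat list \<Rightarrow> nat list \<Rightarrow> bool" where
  "Pt L M N w k A B \<longleftrightarrow> length A = length w + k \<and> length B = length w + k \<and>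
     set A \<subseteq> dom M \<and> set B \<subseteq> dom N \<and>
     (\<forall>\<phi>. fm_in L (vsq w k) \<phi> \<longrightarrow> (satt M \<phi> (vsq w k) A \<longleftrightarrow> satt N \<phi> (vsq w k) B))"

lemma Pt_sym: "Pt L M N w k A B \<Longrightarrow> Pt L N M w k B A"
  unfolding Pt_def by auto

lemma forth:
  fixes M N :: "(nat,'f,'r) strc"
  assumes aM: "atomic_model L T M" and mN: "models L T N" and dw: "distinct w"
    and P: "Pt L M N w k A B" and c: "c \<in> dom M"
  shows "\<exists>d\<in>dom N. Pt L M N w (Suc k) (A@[c]) (B@[d])"
proof -
  let ?u = "vsq w k" and ?v = "vbase w + k"
  have u': "vsq w (Suc k) = ?u @ [?v]" by (rule vsq_Suc)
  have du: "distinct (?u @ [?v])" using distinct_vsq[OF dw, of "Suc k"] u' by simp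
  have mM: "models L T M" using aM by (simp add: atomic_model_def)
  have lA: "length A = length ?u" "set A \<subseteq> dom M" and lB: "length B = length ?u" "set B \<subseteq> dom N"
    using P by (auto simp: Pt_def)
  have lAc: "length (A@[c]) = length (?u@[?v])" "set (A@[c]) \<subseteq> dom M" using lA c by auto
  obtain \<theta> where th: "fm_in L (?u@[?v]) \<theta>" "satt M \<theta> (?u@[?v]) (A@[c])"
    "\<forall>\<phi>. fm_in L (?u@[?v]) \<phi> \<and> satt M \<phi> (?u@[?v]) (A@[c]) \<longrightarrow> entails L T (Imp \<theta> \<phi>)"
    using aM du lAc unfolding atomic_model_def by blast
  have fe: "fm_in L ?u (Exs [?v] \<theta>)" using th(1) du
    by (auto simp: fm_in_def freevars_Exs)
  have "satt M (Exs [?v] \<theta>) ?u A" using satt_Exs_I[OF th(2) du _ lA(1)] by simp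
  then have "satt N (Exs [?v] \<theta>) ?u B" using P fe by (simp add: Pt_def)
  then obtain ds where ds: "length ds = 1" "set ds \<subseteq> dom N" "satt N \<theta> (?u@[?v]) (B@ds)"
    using satt_Exs_D[OF _ du models_ne[OF mN]] th(1) by (fastforce simp: fm_in_def)
  then obtain d where d: "ds = [d]" by (cases ds) auto
  have dN: "d \<in> dom N" using ds d by simp
  have "Pt L M N w (Suc k) (A@[c]) (B@[d])"
    unfolding Pt_def
  proof (intro conjI allI impI)
    show "length (A @ [c]) = length w + Suc k" "length (B @ [d]) = length w + Suc k"
      using lA lB by auto
    show "set (A @ [c]) \<subseteq> dom M" "set (B @ [d]) \<subseteq> dom N" using lA lB c dN by auto
    fix \<phi> assume f: "fm_in L (vsq w (Suc k)) \<phi>"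
    then have f': "fm_in L (?u@[?v]) \<phi>" using u' by simp
    have fv: "freevars \<phi> \<subseteq> set (?u@[?v])" using f' by (simp add: fm_in_def)
    have sB: "satt N \<theta> (?u@[?v]) (B@[d])" using ds d by simp
    have lBd: "length (B@[d]) = length (?u@[?v])" "set (B@[d]) \<subseteq> dom N" using lB dN by auto
    show "satt M \<phi> (vsq w (Suc k)) (A @ [c]) = satt N \<phi> (vsq w (Suc k)) (B @ [d])"
    proof
      assume "satt M \<phi> (vsq w (Suc k)) (A @ [c])"
      then have "entails L T (Imp \<theta> \<phi>)" using th(3) f' u' by simp
      then show "satt N \<phi> (vsq w (Suc k)) (B @ [d])" using entails_satt[OF _ mN sB] u' by simp
    next
      assume sN: "satt N \<phi> (vsq w (Suc k)) (B @ [d])"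
      show "satt M \<phi> (vsq w (Suc k)) (A @ [c])"
      proof (rule ccontr)
        assume "\<not> satt M \<phi> (vsq w (Suc k)) (A @ [c])"
        then have "satt M (Neg \<phi>) (?u@[?v]) (A@[c])"
          using satt_neg[OF du lAc models_ne[OF mM] fv] u' by simp
        moreover have "fm_in L (?u@[?v]) (Neg \<phi>)" using f' by (simp add: fm_in_def)
        ultimately have "entails L T (Imp \<theta> (Neg \<phi>))" using th(3) by blast
        then have "satt N (Neg \<phi>) (?u@[?v]) (B@[d])" using entails_satt[OF _ mN sB] by simp
        then show False using satt_neg[OF du lBd models_ne[OF mN] fv] sN u' by simp
      qed
    qed
  qed
  then show ?thesis using dN by blast
qed

lemma back_step:
  fixes M N :: "(nat,'f,'r) strc"
  assumes mM: "models L T M" and aN: "atomic_model L T N" and dw: "distinct w"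
    and P: "Pt L M N w k A B" and d: "d \<in> dom N"
  shows "\<exists>c\<in>dom M. Pt L M N w (Suc k) (A@[c]) (B@[d])"
  using forth[OF aN mM dw Pt_sym[OF P] d] Pt_sym by blast

context
  fixes L :: "('f,'r) lang" and T :: "('f,'r) fm set" and M N :: "(nat,'f,'r) strc"
    and w :: "nat list" and as bs :: "nat list"
  assumes aM: "atomic_model L T M" and aN: "atomic_model L T N" and dw: "distinct w"
    and P0: "Pt L M N w 0 as bs"
begin

definition "fd k A B c = (SOME d. d \<in> dom N \<and> Pt L M N w (Suc k) (A@[c]) (B@[d]))"
definition "bc k A B d = (SOME c. c \<in> dom M \<and> Pt L M N w (Suc k) (A@[c]) (B@[d]))"
definition "em i = (if i \<in> dom M then i else (SOME x. x \<in> dom M))"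
definition "en i = (if i \<in> dom N then i else (SOME x. x \<in> dom N))"

definition "bfstep k p = (if even k then (fst p @ [em (k div 2)], snd p @ [fd k (fst p) (snd p) (em (k div 2))])
   else (fst p @ [bc k (fst p) (snd p) (en (k div 2))], snd p @ [en (k div 2)]))"

fun seq :: "nat \<Rightarrow> nat list \<times> nat list" where
  "seq 0 = (as, bs)"
| "seq (Suc k) = bfstep k (seq k)"

declare seq.simps(2)[simp del]

lemma mM: "models L T M" and mN: "models L T N"
  using aM aN by (auto simp: atomic_model_def)

lemma em_dom: "em i \<in> dom M"
  using models_ne[OF mM] by (auto simp: em_def intro: someI_ex)
lemma en_dom: "en i \<in> dom N"
  using models_ne[OF mN] by (auto simp: en_def intro: someI_ex)

lemma seq_P: "Pt L M N w k (fst (seq k)) (snd (seq k))"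
proof (induct k)
  case 0 then show ?case using P0 by simp
next
  case (Suc k)
  let ?A = "fst (seq k)" and ?B = "snd (seq k)"
  show ?case
  proof (cases "even k")
    case True
    let ?c = "em (k div 2)"
    have "\<exists>d. d \<in> dom N \<and> Pt L M N w (Suc k) (?A@[?c]) (?B@[d])"
      using forth[OF aM mN dw Suc em_dom] by blast
    then have "Pt L M N w (Suc k) (?A@[?c]) (?B@[fd k ?A ?B ?c])"
      unfolding fd_def by (rule someI2_ex) blast
    then show ?thesis using True by (simp add: bfstep_def seq.simps(2))
  next
    case False
    let ?d = "en (k div 2)"
    have "\<exists>c. c \<in> dom M \<and> Pt L M N w (Suc k) (?A@[c]) (?B@[?d])"
      using back_step[OF mM aN dw Suc en_dom] by blast
    then have "Pt L M N w (Suc k) (?A@[bc k ?A ?B ?d]) (?B@[?d])"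
      unfolding bc_def by (rule someI2_ex) blast
    then show ?thesis using False by (simp add: bfstep_def seq.simps(2))
  qed
qed

lemma seq_len: "length (fst (seq k)) = length w + k" "length (snd (seq k)) = length w + k"
  using seq_P[of k] by (auto simp: Pt_def)

lemma bfstep_app: "\<exists>c d. fst (bfstep k p) = fst p @ [c] \<and> snd (bfstep k p) = snd p @ [d]"
  by (simp add: bfstep_def)

lemma seq_prefix:
  assumes "k \<le> k'" "i < length w + k"
  shows "fst (seq k') ! i = fst (seq k) ! i \<and> snd (seq k') ! i = snd (seq k) ! i"
  using assms(1)
proof (induct k' rule: dec_induct)
  case base then show ?case by simp
next
  case (step m)
  obtain c d where cd: "fst (seq (Suc m)) = fst (seq m) @ [c]" "snd (seq (Suc m)) = snd (seq m) @ [d]"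
    using bfstep_app[of m "seq m"] by (auto simp: seq.simps(2))
  have "i < length (fst (seq m))" "i < length (snd (seq m))" using seq_len step(1) assms(2) by auto
  then show ?case using cd step(3) by (simp add: nth_append)
qed

definition "xa i = fst (seq (Suc i)) ! i"
definition "xb i = snd (seq (Suc i)) ! i"

lemma seq_map: "fst (seq k) = map xa [0..<length w + k] \<and> snd (seq k) = map xb [0..<length w + k]"
proof -
  have "fst (seq k) ! i = xa i \<and> snd (seq k) ! i = xb i" if i: "i < length w + k" for i
  proof (cases "Suc i \<le> k")
    case True
    then show ?thesis using seq_prefix[OF True, of i] by (simp add: xa_def xb_def)
  next
    case False
    then have "k \<le> Suc i" by simp
    then show ?thesis using seq_prefix[of k "Suc i" i] i by (simp add: xa_def xb_def)
  qed
  then show ?thesis using seq_len by (auto intro: nth_equalityI)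
qed

lemma xa_dom: "xa i \<in> dom M" and xb_dom: "xb i \<in> dom N"
proof -
  have "set (fst (seq (Suc i))) \<subseteq> dom M" "set (snd (seq (Suc i))) \<subseteq> dom N"
    using seq_P[of "Suc i"] by (auto simp: Pt_def)
  moreover have "i < length (fst (seq (Suc i)))" "i < length (snd (seq (Suc i)))" using seq_len by auto
  ultimately show "xa i \<in> dom M" "xb i \<in> dom N" unfolding xa_def xb_def by (auto dest: nth_mem)
qed

lemma xa_surj: assumes "x \<in> dom M" shows "xa (length w + 2 * x) = x"
proof -
  have "fst (seq (Suc (2*x))) = fst (seq (2*x)) @ [em x]" by (simp add: bfstep_def seq.simps(2))
  then have "fst (seq (Suc (2*x))) ! (length w + 2*x) = em x" using seq_len by (simp add: nth_append)
  moreover have "fst (seq (Suc (length w + 2*x))) ! (length w + 2*x) = fst (seq (Suc (2*x))) ! (length w + 2*x)"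
    using seq_prefix[of "Suc (2*x)" "Suc (length w + 2*x)" "length w + 2*x"] by simp
  ultimately show ?thesis using assms by (simp add: xa_def em_def)
qed

lemma xb_surj: assumes "y \<in> dom N" shows "xb (length w + Suc (2 * y)) = y"
proof -
  have "snd (seq (Suc (Suc (2*y)))) = snd (seq (Suc (2*y))) @ [en y]"
    by (simp add: bfstep_def seq.simps(2)[of "Suc (2*y)"])
  then have "snd (seq (Suc (Suc (2*y)))) ! (length w + Suc (2*y)) = en y" using seq_len by (simp add: nth_append)
  moreover have "snd (seq (Suc (length w + Suc (2*y)))) ! (length w + Suc (2*y)) = snd (seq (Suc (Suc (2*y)))) ! (length w + Suc (2*y))"
    using seq_prefix[of "Suc (Suc (2*y))" "Suc (length w + Suc (2*y))" "length w + Suc (2*y)"] by simp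
  ultimately show ?thesis using assms by (simp add: xb_def en_def)
qed

lemma env_transfer:
  assumes "fm_in L (vsq w n) \<phi>"
  obtains eM eN where "range eM \<subseteq> dom M" "range eN \<subseteq> dom N"
    "\<And>i. i < length w + n \<Longrightarrow> eM (vsq w n ! i) = xa i"
    "\<And>i. i < length w + n \<Longrightarrow> eN (vsq w n ! i) = xb i"
    "sat M eM \<phi> \<longleftrightarrow> sat N eN \<phi>"
proof -
  let ?u = "vsq w n" and ?A = "map xa [0..<length w + n]" and ?B = "map xb [0..<length w + n]"
  have P: "Pt L M N w n ?A ?B" using seq_P[of n] seq_map[of n] by simp
  have du: "distinct ?u" by (rule distinct_vsq[OF dw])
  have lA: "length ?A = length ?u" "set ?A \<subseteq> dom M" using P by (auto simp: Pt_def)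
  have lB: "length ?B = length ?u" "set ?B \<subseteq> dom N" using P by (auto simp: Pt_def)
  obtain eM where eM: "range eM \<subseteq> dom M" "matches eM ?u ?A"
    using env_exists[OF du lA models_ne[OF mM]] by blast
  obtain eN where eN: "range eN \<subseteq> dom N" "matches eN ?u ?B"
    using env_exists[OF du lB models_ne[OF mN]] by blast
  have fv: "freevars \<phi> \<subseteq> set ?u" using assms by (simp add: fm_in_def)
  have "sat M eM \<phi> \<longleftrightarrow> satt M \<phi> ?u ?A" using satt_e0[OF lA fv eM] by simp
  also have "\<dots> \<longleftrightarrow> satt N \<phi> ?u ?B" using P assms by (simp add: Pt_def)
  also have "\<dots> \<longleftrightarrow> sat N eN \<phi>" using satt_e0[OF lB fv eN] by simp
  finally have s: "sat M eM \<phi> \<longleftrightarrow> sat N eN \<phi>" .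
  show ?thesis
    by (rule that[OF eM(1) eN(1) _ _ s]) (use eM(2) eN(2) in \<open>auto simp: matches_def\<close>)
qed

lemma vsq_mem: "i < length w + n \<Longrightarrow> vsq w n ! i \<in> set (vsq w n)"
  by (simp add: nth_mem)

lemma eq_transfer: "xa i = xa j \<longleftrightarrow> xb i = xb j"
proof -
  let ?n = "Suc (i + j)"
  let ?\<phi> = "Eq (Var (vsq w ?n ! i)) (Var (vsq w ?n ! j)) :: ('f,'r) fm"
  have f: "fm_in L (vsq w ?n) ?\<phi>" using vsq_mem[of i ?n] vsq_mem[of j ?n] by (simp add: fm_in_def)
  obtain eM eN where e: "\<And>i'. i' < length w + ?n \<Longrightarrow> eM (vsq w ?n ! i') = xa i'"
    "\<And>i'. i' < length w + ?n \<Longrightarrow> eN (vsq w ?n ! i') = xb i'" "sat M eM ?\<phi> \<longleftrightarrow> sat N eN ?\<phi>"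
    using env_transfer[OF f] by metis
  then show ?thesis by simp
qed

lemma fn_transfer:
  assumes "length is = farity L f"
  shows "fint M f (map xa is) = xa j \<longleftrightarrow> fint N f (map xb is) = xb j"
proof -
  let ?n = "Suc (j + sum_list is)"
  have ib: "\<And>i. i \<in> set is \<Longrightarrow> i < length w + ?n" using member_le_sum_list by fastforce
  let ?\<phi> = "Eq (Fn f (map (\<lambda>i. Var (vsq w ?n ! i)) is)) (Var (vsq w ?n ! j)) :: ('f,'r) fm"
  have f: "fm_in L (vsq w ?n) ?\<phi>" using vsq_mem[of j ?n] vsq_mem ib assms by (auto simp: fm_in_def)
  obtain eM eN where e: "\<And>i'. i' < length w + ?n \<Longrightarrow> eM (vsq w ?n ! i') = xa i'"
    "\<And>i'. i' < length w + ?n \<Longrightarrow> eN (vsq w ?n ! i') = xb i'" "sat M eM ?\<phi> \<longleftrightarrow> sat N eN ?\<phi>"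
    using env_transfer[OF f] by metis
  have m1: "map (eval M eM) (map (\<lambda>i. Var (vsq w ?n ! i)) is) = map xa is" using e(1) ib by auto
  have m2: "map (eval N eN) (map (\<lambda>i. Var (vsq w ?n ! i)) is) = map xb is" using e(2) ib by auto
  show ?thesis using e(3) by (simp only: sat.simps eval.simps m1 m2 e(1) e(2))
qed

lemma rel_transfer:
  assumes "length is = rarity L r"
  shows "rint M r (map xa is) \<longleftrightarrow> rint N r (map xb is)"
proof -
  let ?n = "Suc (sum_list is)"
  have ib: "\<And>i. i \<in> set is \<Longrightarrow> i < length w + ?n" using member_le_sum_list by fastforce
  let ?\<phi> = "Rel r (map (\<lambda>i. Var (vsq w ?n ! i)) is) :: ('f,'r) fm"
  have f: "fm_in L (vsq w ?n) ?\<phi>" using vsq_mem ib assms by (auto simp: fm_in_def)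
  obtain eM eN where e: "\<And>i'. i' < length w + ?n \<Longrightarrow> eM (vsq w ?n ! i') = xa i'"
    "\<And>i'. i' < length w + ?n \<Longrightarrow> eN (vsq w ?n ! i') = xb i'" "sat M eM ?\<phi> \<longleftrightarrow> sat N eN ?\<phi>"
    using env_transfer[OF f] by metis
  have m1: "map (eval M eM) (map (\<lambda>i. Var (vsq w ?n ! i)) is) = map xa is" using e(1) ib by auto
  have m2: "map (eval N eN) (map (\<lambda>i. Var (vsq w ?n ! i)) is) = map xb is" using e(2) ib by auto
  show ?thesis using e(3) by (simp only: sat.simps m1 m2)
qed

definition "hh x = xb (SOME i. xa i = x)"

lemma hh_xa: "hh (xa i) = xb i"
proof -
  have "xa (SOME i'. xa i' = xa i) = xa i" by (rule someI) simp
  then show ?thesis using eq_transfer by (simp add: hh_def)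
qed

lemma map_hh_xa: "map hh (map xa l) = map xb l"
  by (induct l) (simp_all add: hh_xa)

lemma bf_iso: "iso_on L hh M N \<and> map hh as = bs"
proof -
  let ?ix = "\<lambda>x. length w + 2 * x"
  have xa_ix: "\<And>x. x \<in> dom M \<Longrightarrow> xa (?ix x) = x" by (rule xa_surj)
  have inj: "inj_on hh (dom M)"
  proof (rule inj_onI)
    fix x y assume "x \<in> dom M" "y \<in> dom M" "hh x = hh y"
    then have "xb (?ix x) = xb (?ix y)" using xa_ix[of x] xa_ix[of y] hh_xa[of "?ix x"] hh_xa[of "?ix y"] by simp
    then have "xa (?ix x) = xa (?ix y)" using eq_transfer by blast
    then show "x = y" using xa_ix[of x] xa_ix[of y] \<open>x \<in> dom M\<close> \<open>y \<in> dom M\<close> by simp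
  qed
  have img: "hh ` dom M = dom N"
  proof
    show "hh ` dom M \<subseteq> dom N"
    proof
      fix y assume "y \<in> hh ` dom M"
      then obtain x where x: "x \<in> dom M" "y = hh x" by blast
      then have "y = xb (?ix x)" using xa_ix[OF x(1)] hh_xa[of "?ix x"] by simp
      then show "y \<in> dom N" using xb_dom by simp
    qed
    show "dom N \<subseteq> hh ` dom M"
    proof
      fix y assume "y \<in> dom N"
      then have "y = hh (xa (length w + Suc (2*y)))" using xb_surj[of y] hh_xa[of "length w + Suc (2*y)"] by simp
      then show "y \<in> hh ` dom M" using xa_dom by blast
    qed
  qed
  have st: "is_struct L M" using mM by (simp add: models_def)
  have fi: "hh (fint M f as') = fint N f (map hh as')"
    if "length as' = farity L f" "set as' \<subseteq> dom M" for f as'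
  proof -
    let ?is = "map ?ix as'"
    have mi: "map xa ?is = as'" using that(2) xa_ix by (induct as') auto
    have "map hh (map xa ?is) = map xb ?is" by (simp add: hh_xa)
    then have mh: "map hh as' = map xb ?is" by (simp only: mi)
    have "fint M f as' \<in> dom M" using st that by (simp add: is_struct_def)
    then have j: "fint M f (map xa ?is) = xa (?ix (fint M f as'))" using xa_ix mi by simp
    have l: "length ?is = farity L f" using that by simp
    have e1: "fint N f (map xb ?is) = xb (?ix (fint M f as'))" using fn_transfer[OF l] j by blast
    have e2: "hh (fint M f as') = xb (?ix (fint M f as'))"
      using hh_xa[of "?ix (fint M f as')"] xa_ix[OF \<open>fint M f as' \<in> dom M\<close>] by simp
    show ?thesis by (simp only: e2 mh e1)
  qed
  have ri: "rint N r (map hh as') = rint M r as'"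
    if "length as' = rarity L r" "set as' \<subseteq> dom M" for r as'
  proof -
    let ?is = "map ?ix as'"
    have mi: "map xa ?is = as'" using that(2) xa_ix by (induct as') auto
    have "map hh (map xa ?is) = map xb ?is" by (simp add: hh_xa)
    then have mh: "map hh as' = map xb ?is" by (simp only: mi)
    have l: "length ?is = rarity L r" using that by simp
    have "rint M r (map xa ?is) = rint N r (map xb ?is)" using rel_transfer[OF l] by blast
    then show ?thesis by (simp only: mi mh)
  qed
  have "map hh as = bs"
  proof -
    have a1: "as = map xa [0..<length w]" and a2: "bs = map xb [0..<length w]" using seq_map[of 0] by auto
    have "map hh (map xa [0..<length w]) = map xb [0..<length w]" by (rule map_hh_xa)
    with a1 a2 show ?thesis by argo
  qed
  then show ?thesis using inj img st fi ri unfolding iso_on_def by blast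
qed

end

lemma BF:
  fixes M N :: "(nat,'f,'r) strc"
  assumes "atomic_model L T M" "atomic_model L T N" "distinct w"
    "length as = length w" "length bs = length w" "set as \<subseteq> dom M" "set bs \<subseteq> dom N"
    "\<forall>\<phi>. fm_in L w \<phi> \<longrightarrow> (satt M \<phi> w as \<longleftrightarrow> satt N \<phi> w bs)"
  shows "\<exists>h. iso_on L h M N \<and> map h as = bs"
proof -
  have "Pt L M N w 0 as bs" using assms by (simp add: Pt_def)
  then show ?thesis using bf_iso[OF assms(1,2,3)] by blast
qed

definition good_chain :: "('f,'r) lang \<Rightarrow> ('f,'r) fm set \<Rightarrow> (nat,'f,'r) strc list \<Rightarrow> nat list list \<Rightarrow> bool" where
  "good_chain L T Ms ts \<longleftrightarrow> Ms \<noteq> [] \<and> length ts = length Ms \<and>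
     (\<forall>j<length Ms. atomic_model L T (Ms!j) \<and> set (ts!j) \<subseteq> dom (Ms!j)) \<and>
     (\<forall>j j'. j \<le> j' \<and> j' < length Ms \<longrightarrow> elem_sub L (Ms!j) (Ms!j')) \<and>
     (\<forall>j. 0 < j \<and> j < length Ms \<longrightarrow> set (ts!j) \<inter> dom (Ms!(j-1)) = {})"

lemma atomic_struct: "atomic_model L T M \<Longrightarrow> is_struct L M"
  by (simp add: atomic_model_def models_def)

lemma GC_single:
  assumes "atomic_model L T M" "set t \<subseteq> dom M"
  shows "good_chain L T [M] [t]"
  using assms elem_sub_refl[OF atomic_struct[OF assms(1)]] unfolding good_chain_def by auto

lemma GC_last: "good_chain L T Ms ts \<Longrightarrow> last Ms = Ms ! (length Ms - 1)"
  by (simp add: good_chain_def last_conv_nth)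

lemma GC_dom_last:
  assumes "good_chain L T Ms ts" "j < length Ms"
  shows "dom (Ms!j) \<subseteq> dom (last Ms)"
proof -
  have "elem_sub L (Ms!j) (Ms!(length Ms - 1))" using assms unfolding good_chain_def by auto
  then show ?thesis using GC_last[OF assms(1)] elem_sub_dom by metis
qed

lemma GC_rename:
  assumes gc: "good_chain L T Ms ts" and inj: "inj_on g (dom (last Ms))" and wT: "\<forall>\<phi>\<in>T. wf_fm L \<phi>"
  shows "good_chain L T (map (img g) Ms) (map (map g) ts)"
proof -
  have ne: "Ms \<noteq> []" and lt: "length ts = length Ms" using gc by (auto simp: good_chain_def)
  have injj: "inj_on g (dom (Ms!j))" if "j < length Ms" for j
    using inj_on_subset[OF inj GC_dom_last[OF gc that]] .
  have at: "atomic_model L T (img g (Ms!j))" if "j < length Ms" for j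
  proof -
    have "atomic_model L T (Ms!j)" using gc that by (simp add: good_chain_def)
    then show ?thesis using iso_atomic[OF iso_img[OF injj[OF that] atomic_struct] _ wT] that by blast
  qed
  have st: "set (map g (ts!j)) \<subseteq> dom (img g (Ms!j))" if "j < length Ms" for j
    using gc that by (auto simp: good_chain_def)
  have es: "elem_sub L (img g (Ms!j)) (img g (Ms!j'))" if "j \<le> j'" "j' < length Ms" for j j'
    using elem_sub_img[OF _ injj[OF that(2)]] gc that by (simp add: good_chain_def)
  have dj: "set (map g (ts!j)) \<inter> dom (img g (Ms!(j-1))) = {}" if "0 < j" "j < length Ms" for j
  proof -
    have "set (ts!j) \<subseteq> dom (last Ms)" using gc that GC_dom_last[OF gc that(2)] by (auto simp: good_chain_def)
    moreover have "dom (Ms!(j-1)) \<subseteq> dom (last Ms)" using GC_dom_last[OF gc] that by simp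
    moreover have "set (ts!j) \<inter> dom (Ms!(j-1)) = {}" using gc that by (simp add: good_chain_def)
    ultimately have "g ` set (ts!j) \<inter> g ` dom (Ms!(j-1)) = {}"
      using inj_on_image_Int[OF inj] by (metis image_empty)
    then show ?thesis by simp
  qed
  show ?thesis unfolding good_chain_def
  proof (intro conjI allI impI)
    show "map (img g) Ms \<noteq> []" using ne by simp
    show "length (map (map g) ts) = length (map (img g) Ms)" using lt by simp
    fix j assume j: "j < length (map (img g) Ms)"
    show "atomic_model L T (map (img g) Ms ! j)" using at j by simp
    show "set (map (map g) ts ! j) \<subseteq> dom (map (img g) Ms ! j)" using st j lt by simp
  next
    fix j j' assume "j \<le> j' \<and> j' < length (map (img g) Ms)"
    then show "elem_sub L (map (img g) Ms ! j) (map (img g) Ms ! j')" using es by simp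
  next
    fix j assume j: "0 < j \<and> j < length (map (img g) Ms)"
    show "set (map (map g) ts ! j) \<inter> dom (map (img g) Ms ! (j - 1)) = {}"
    proof -
      have "j - 1 < length Ms" using j by auto
      then show ?thesis using dj[of j] lt j by simp
    qed
  qed
qed

lemma GC_shrink:
  assumes "good_chain L T Ms ts" "length ts' = length ts" "\<forall>j<length ts. set (ts'!j) \<subseteq> set (ts!j)"
  shows "good_chain L T Ms ts'"
proof -
  have ne: "Ms \<noteq> []" and lt: "length ts = length Ms"
   and A: "\<forall>j<length Ms. atomic_model L T (Ms!j) \<and> set (ts!j) \<subseteq> dom (Ms!j)"
   and E: "\<forall>j j'. j \<le> j' \<and> j' < length Ms \<longrightarrow> elem_sub L (Ms!j) (Ms!j')"
   and J: "\<forall>j. 0 < j \<and> j < length Ms \<longrightarrow> set (ts!j) \<inter> dom (Ms!(j-1)) = {}"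
    using assms(1) unfolding good_chain_def by blast+
  have A': "\<forall>j<length Ms. atomic_model L T (Ms!j) \<and> set (ts'!j) \<subseteq> dom (Ms!j)"
  proof (intro allI impI)
    fix j assume j: "j < length Ms"
    then have "set (ts'!j) \<subseteq> set (ts!j)" using assms(3) lt by simp
    then show "atomic_model L T (Ms!j) \<and> set (ts'!j) \<subseteq> dom (Ms!j)" using A j by blast
  qed
  have J': "\<forall>j. 0 < j \<and> j < length Ms \<longrightarrow> set (ts'!j) \<inter> dom (Ms!(j-1)) = {}"
  proof (intro allI impI)
    fix j assume j: "0 < j \<and> j < length Ms"
    then have "set (ts'!j) \<subseteq> set (ts!j)" using assms(3) lt by simp
    then show "set (ts'!j) \<inter> dom (Ms!(j-1)) = {}" using J j by blast
  qed
  show ?thesis unfolding good_chain_def using ne lt assms(2) A' E J' by simp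
qed

lemma GC_append:
  assumes g1: "good_chain L T Ms ts" and g2: "good_chain L T Ns us"
    and es: "elem_sub L (last Ms) (hd Ns)"
  shows "good_chain L T (Ms @ tl Ns) (ts @ tl us)"
proof -
  let ?m = "length Ms" and ?n = "length Ns"
  have ne1: "Ms \<noteq> []" and l1: "length ts = ?m" and ne2: "Ns \<noteq> []" and l2: "length us = ?n"
    using g1 g2 by (auto simp: good_chain_def)
  have lastM: "last Ms = Ms!(?m-1)" using GC_last[OF g1] .
  have hdN: "hd Ns = Ns!0" using ne2 by (simp add: hd_conv_nth)
  have C1: "(Ms @ tl Ns) ! k = Ms!k" "(ts @ tl us) ! k = ts!k" if "k < ?m" for k
    using that l1 by (auto simp: nth_append)
  have C2: "(Ms @ tl Ns) ! k = Ns!(k - ?m + 1)" "(ts @ tl us) ! k = us!(k - ?m + 1)"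
    if "?m \<le> k" "k < ?m + ?n - 1" for k
    using that ne2 l1 l2 by (auto simp: nth_append nth_tl)
  have len: "length (Ms @ tl Ns) = ?m + ?n - 1" using ne2 by (cases Ns) auto
  have A1: "\<forall>j<?m. atomic_model L T (Ms!j) \<and> set (ts!j) \<subseteq> dom (Ms!j)"
   and E1: "\<forall>j j'. j \<le> j' \<and> j' < ?m \<longrightarrow> elem_sub L (Ms!j) (Ms!j')"
   and J1: "\<forall>j. 0 < j \<and> j < ?m \<longrightarrow> set (ts!j) \<inter> dom (Ms!(j-1)) = {}"
    using g1 unfolding good_chain_def by simp_all
  have A2: "\<forall>j<?n. atomic_model L T (Ns!j) \<and> set (us!j) \<subseteq> dom (Ns!j)"
   and E2: "\<forall>j j'. j \<le> j' \<and> j' < ?n \<longrightarrow> elem_sub L (Ns!j) (Ns!j')"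
   and J2: "\<forall>j. 0 < j \<and> j < ?n \<longrightarrow> set (us!j) \<inter> dom (Ns!(j-1)) = {}"
    using g2 unfolding good_chain_def by simp_all
  have cross: "elem_sub L (Ms!j) (Ns!j')" if "j < ?m" "j' < ?n" for j j'
  proof -
    have "?m - 1 < ?m" "j \<le> ?m - 1" using that by auto
    then have "elem_sub L (Ms!j) (last Ms)" using E1 lastM by simp
    moreover have "elem_sub L (hd Ns) (Ns!j')" using E2 that hdN by simp
    ultimately show ?thesis using es elem_sub_trans by metis
  qed
  have PA: "atomic_model L T ((Ms @ tl Ns) ! j) \<and> set ((ts @ tl us) ! j) \<subseteq> dom ((Ms @ tl Ns) ! j)"
    if j: "j < ?m + ?n - 1" for j
  proof (cases "j < ?m")
    case True then show ?thesis using C1[OF True] A1 by simp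
  next
    case False
    then have "?m \<le> j" "j - ?m + 1 < ?n" using j by auto
    then show ?thesis using C2[OF \<open>?m \<le> j\<close> j] A2 by simp
  qed
  have PE: "elem_sub L ((Ms @ tl Ns) ! j) ((Ms @ tl Ns) ! j')"
    if jj: "j \<le> j'" "j' < ?m + ?n - 1" for j j'
  proof (cases "j' < ?m")
    case True
    then have "j < ?m" using jj by simp
    then show ?thesis using C1(1)[OF True] C1(1)[of j] E1 jj True by simp
  next
    case False
    then have m': "?m \<le> j'" "j' - ?m + 1 < ?n" using jj by auto
    show ?thesis
    proof (cases "j < ?m")
      case True then show ?thesis using C1(1)[OF True] C2(1)[OF m'(1) jj(2)] cross[OF True m'(2)] by simp
    next
      case F2: False
      then have "?m \<le> j" "j - ?m + 1 \<le> j' - ?m + 1" using jj by auto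
      then show ?thesis using C2(1)[OF \<open>?m \<le> j\<close>] C2(1)[OF m'(1) jj(2)] E2 m'(2) jj by simp
    qed
  qed
  have PJ: "set ((ts @ tl us) ! j) \<inter> dom ((Ms @ tl Ns) ! (j - 1)) = {}"
    if j: "0 < j" "j < ?m + ?n - 1" for j
  proof (cases "j < ?m")
    case True
    then have "j - 1 < ?m" by simp
    then show ?thesis using C1(2)[OF True] C1(1)[of "j-1"] J1 j True by simp
  next
    case False
    show ?thesis
    proof (cases "j = ?m")
      case True
      have m1: "?m - 1 < ?m" using ne1 by simp
      have f1: "(Ms @ tl Ns) ! (j - 1) = last Ms" using C1(1)[OF m1] True lastM by simp
      have f2: "dom (last Ms) \<subseteq> dom (Ns!0)" using es hdN elem_sub_dom by metis
      have "1 < ?n" using j True by simp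
      then have "set (us!1) \<inter> dom (Ns!(1-1)) = {}" using J2 by blast
      then have f3: "set (us!1) \<inter> dom (Ns!0) = {}" by simp
      have f4: "(ts @ tl us) ! j = us!1" using C2(2)[of j] True j by simp
      show ?thesis unfolding f1 f4 using f2 f3 by blast
    next
      case F2: False
      then have k: "?m \<le> j - 1" "j - 1 < ?m + ?n - 1" "?m \<le> j" using False j by auto
      have jm: "j - 1 - ?m + 1 = j - ?m" using k F2 by linarith
      have f1: "(Ms @ tl Ns) ! (j - 1) = Ns!(j - ?m)" using C2(1)[OF k(1) k(2)] by (simp only: jm)
      have f2: "(ts @ tl us) ! j = us!(j - ?m + 1)" using C2(2)[OF k(3) j(2)] by simp
      have "0 < j - ?m + 1 \<and> j - ?m + 1 < ?n" using j False by auto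
      then have "set (us!(j - ?m + 1)) \<inter> dom (Ns!(j - ?m + 1 - 1)) = {}"
        by (rule J2[rule_format])
      moreover have "j - ?m + 1 - 1 = j - ?m" by simp
      ultimately have f3: "set (us!(j - ?m + 1)) \<inter> dom (Ns!(j - ?m)) = {}" by metis
      show ?thesis unfolding f1 f2 by (rule f3)
    qed
  qed
  show ?thesis unfolding good_chain_def
  proof (intro conjI allI impI)
    show "Ms @ tl Ns \<noteq> []" using ne1 by simp
    show "length (ts @ tl us) = length (Ms @ tl Ns)" using l1 l2 by simp
    fix j assume "j < length (Ms @ tl Ns)"
    then have j: "j < ?m + ?n - 1" using len by simp
    show "atomic_model L T ((Ms @ tl Ns) ! j)" using PA[OF j] by blast
    show "set ((ts @ tl us) ! j) \<subseteq> dom ((Ms @ tl Ns) ! j)" using PA[OF j] by blast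
  next
    fix j j' assume a: "j \<le> j' \<and> j' < length (Ms @ tl Ns)"
    then have "j' < ?m + ?n - 1" using len by simp
    then show "elem_sub L ((Ms @ tl Ns) ! j) ((Ms @ tl Ns) ! j')" using PE a by blast
  next
    fix j assume a: "0 < j \<and> j < length (Ms @ tl Ns)"
    then have "j < ?m + ?n - 1" using len by simp
    then show "set ((ts @ tl us) ! j) \<inter> dom ((Ms @ tl Ns) ! (j - 1)) = {}" using PJ a by blast
  qed
qed

lemma set_concat_take: "x \<in> set (concat (take i ts)) \<Longrightarrow> \<exists>j<i. j < length ts \<and> x \<in> set (ts!j)"
proof -
  assume "x \<in> set (concat (take i ts))"
  then obtain l where l: "l \<in> set (take i ts)" "x \<in> set l" by auto
  then obtain k where "k < length (take i ts)" "take i ts ! k = l" by (auto simp: in_set_conv_nth)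
  then show ?thesis using l by (intro exI[of _ k]) auto
qed

lemma set_concat_drop: "x \<in> set (concat (drop i ts)) \<Longrightarrow> \<exists>j. i \<le> j \<and> j < length ts \<and> x \<in> set (ts!j)"
proof -
  assume "x \<in> set (concat (drop i ts))"
  then obtain l where l: "l \<in> set (drop i ts)" "x \<in> set l" by auto
  then obtain k where "k < length (drop i ts)" "drop i ts ! k = l" by (auto simp: in_set_conv_nth)
  then show ?thesis using l by (intro exI[of _ "i+k"]) auto
qed

lemma length_concat_map: "map length ts = map length Bs \<Longrightarrow> length (concat ts) = length (concat Bs)"
  by (simp add: length_concat)

lemma GC_final:
  assumes gc: "good_chain L T Ms ts" and lM: "length Ms = length Bs" and ml: "map length ts = map length Bs"
    and cf: "complete_formula L T (concat Bs) \<psi>" and s: "satt (last Ms) \<psi> (concat Bs) (concat ts)"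
  shows "striated L T \<psi> Bs"
  unfolding striated_def
proof (intro conjI allI impI)
  show "complete_formula L T (concat Bs) \<psi>" by fact
  fix i assume i: "0 < i \<and> i < length Bs"
  have lt: "length ts = length Ms" using gc by (simp add: good_chain_def)
  have A: "\<forall>j<length Ms. atomic_model L T (Ms!j) \<and> set (ts!j) \<subseteq> dom (Ms!j)"
   and E: "\<forall>j j'. j \<le> j' \<and> j' < length Ms \<longrightarrow> elem_sub L (Ms!j) (Ms!j')"
   and J: "\<forall>j. 0 < j \<and> j < length Ms \<longrightarrow> set (ts!j) \<inter> dom (Ms!(j-1)) = {}"
    using gc unfolding good_chain_def by blast+
  have lastM: "last Ms = Ms!(length Ms - 1)" using GC_last[OF gc] .
  let ?M = "Ms!(i-1)" and ?N = "last Ms" and ?bs = "concat (take i ts)" and ?as = "concat (drop i ts)"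
  have i1: "i - 1 < length Ms" using i lM by linarith
  have aM: "atomic_model L T ?M" using A i1 by blast
  have lm1: "length Ms - 1 < length Ms" using i lM by linarith
  have aN: "atomic_model L T ?N" using A[rule_format, OF lm1] lastM by simp
  have "i - 1 \<le> length Ms - 1" using i lM by linarith
  then have eMN: "elem_sub L ?M ?N" using E[rule_format, of "i-1" "length Ms - 1"] lm1 lastM by simp
  have l1: "length ?bs = length (concat (take i Bs))"
    using ml by (intro length_concat_map) (metis take_map)
  have l2: "length ?as = length (concat (drop i Bs))"
    using ml by (intro length_concat_map) (metis drop_map)
  have s1: "set ?bs \<subseteq> dom ?M"
  proof
    fix x assume "x \<in> set ?bs"
    then obtain j where j: "j < i" "j < length ts" "x \<in> set (ts!j)" using set_concat_take by metis
    then have "x \<in> dom (Ms!j)" using A lt by auto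
    moreover have "j \<le> i - 1" using j by linarith
    then have "elem_sub L (Ms!j) ?M" using E[rule_format, of j "i-1"] i1 by blast
    ultimately show "x \<in> dom ?M" using elem_sub_dom by blast
  qed
  have s2: "set ?as \<subseteq> dom ?N - dom ?M"
  proof
    fix x assume "x \<in> set ?as"
    then obtain j where j: "i \<le> j" "j < length ts" "x \<in> set (ts!j)" using set_concat_drop by metis
    then have x1: "x \<in> dom (Ms!j)" using A lt by auto
    have x2: "x \<in> dom ?N" using GC_dom_last[OF gc] j lt x1 by auto
    have "0 < j \<and> j < length Ms" using j i lt by auto
    then have "set (ts!j) \<inter> dom (Ms!(j-1)) = {}" by (rule J[rule_format])
    then have x3: "x \<notin> dom (Ms!(j-1))" using j(3) by blast
    have "i - 1 \<le> j - 1" "j - 1 < length Ms" using j i lt by auto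
    then have x4: "dom ?M \<subseteq> dom (Ms!(j-1))" using E[rule_format, of "i-1" "j-1"] elem_sub_dom by blast
    show "x \<in> dom ?N - dom ?M" using x2 x3 x4 by blast
  qed
  have e1: "concat (take i Bs) @ concat (drop i Bs) = concat Bs"
    by (metis append_take_drop_id concat_append)
  have e2: "?bs @ ?as = concat ts"
    by (metis append_take_drop_id concat_append)
  have sN: "satt ?N \<psi> (concat (take i Bs) @ concat (drop i Bs)) (?bs @ ?as)"
    unfolding e1 e2 by (rule s)
  have cf': "complete_formula L T (concat (take i Bs) @ concat (drop i Bs)) \<psi>"
    unfolding e1 by (rule cf)
  show "extendible L T \<psi> (concat (take i Bs)) (concat (drop i Bs))"
    unfolding extendible_def
    apply (rule conjI[OF cf'])
    apply (rule exI[of _ ?M], rule exI[of _ ?N], rule exI[of _ ?bs], rule exI[of _ ?as])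
    using aM aN eMN l1 l2 s1 s2 sN by blast
qed

lemma GC_pair:
  assumes aM: "atomic_model L T M" and aN: "atomic_model L T N" and e: "elem_sub L M N"
    and s: "set as \<subseteq> dom N" and d: "set as \<inter> dom M = {}"
  shows "good_chain L T [M, N] [[], as]"
proof -
  have rM: "elem_sub L M M" and rN: "elem_sub L N N"
    using elem_sub_refl atomic_struct aM aN by blast+
  have A: "\<forall>j<length [M,N]. atomic_model L T ([M,N]!j) \<and> set ([[],as]!j) \<subseteq> dom ([M,N]!j)"
  proof (intro allI impI)
    fix j assume "j < length [M,N]"
    then have "j = 0 \<or> j = 1" by auto
    then show "atomic_model L T ([M,N]!j) \<and> set ([[],as]!j) \<subseteq> dom ([M,N]!j)" using aM aN s by auto
  qed
  have E: "\<forall>j j'. j \<le> j' \<and> j' < length [M,N] \<longrightarrow> elem_sub L ([M,N]!j) ([M,N]!j')"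
  proof (intro allI impI)
    fix j j' assume "j \<le> j' \<and> j' < length [M,N]"
    then have "(j = 0 \<and> j' = 0) \<or> (j = 0 \<and> j' = 1) \<or> (j = 1 \<and> j' = 1)" by auto
    then show "elem_sub L ([M,N]!j) ([M,N]!j')" using rM rN e by auto
  qed
  have J: "\<forall>j. 0 < j \<and> j < length [M,N] \<longrightarrow> set ([[],as]!j) \<inter> dom ([M,N]!(j-1)) = {}"
  proof (intro allI impI)
    fix j assume "0 < j \<and> j < length [M,N]"
    then have "j = 1" by auto
    then show "set ([[],as]!j) \<inter> dom ([M,N]!(j-1)) = {}" using d by simp
  qed
  show ?thesis unfolding good_chain_def using A E J by simp
qed

lemma GC_concat_dom:
  assumes gc: "good_chain L T Ms ts"
  shows "set (concat ts) \<subseteq> dom (last Ms)"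
proof
  fix x assume "x \<in> set (concat ts)"
  then obtain l where l: "l \<in> set ts" "x \<in> set l" by auto
  then obtain j where j: "j < length ts" "ts!j = l" by (auto simp: in_set_conv_nth)
  have lt: "length ts = length Ms" using gc by (simp add: good_chain_def)
  have A: "\<forall>j<length Ms. atomic_model L T (Ms!j) \<and> set (ts!j) \<subseteq> dom (Ms!j)"
    using gc unfolding good_chain_def by simp
  have jm: "j < length Ms" using j lt by simp
  have "set (ts!j) \<subseteq> dom (Ms!j)" using A jm by blast
  then show "x \<in> dom (last Ms)" using GC_dom_last[OF gc] j lt l by auto
qed

lemma CB_step:
  fixes Ms :: "(nat,'f,'r) strc list"
  assumes st: "striated L T \<theta> Bs" and wT: "\<forall>\<phi>\<in>T. wf_fm L \<phi>" and k1: "Suc k < length Bs"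
    and gc: "good_chain L T Ms ts" and lM: "length Ms = Suc k"
    and ml: "map length ts = map length (take k Bs @ [concat (drop k Bs)])"
    and sa: "satt (last Ms) \<theta> (concat Bs) (concat ts)"
  shows "\<exists>Ms' ts'. good_chain L T Ms' ts' \<and> length Ms' = Suc (Suc k) \<and>
     map length ts' = map length (take (Suc k) Bs @ [concat (drop (Suc k) Bs)]) \<and>
     satt (last Ms') \<theta> (concat Bs) (concat ts')"
proof -
  define u where "u = concat (take (Suc k) Bs)"
  define x where "x = concat (drop (Suc k) Bs)"
  have ux: "u @ x = concat Bs" unfolding u_def x_def by (metis append_take_drop_id concat_append)
  have "extendible L T \<theta> u x" using st k1 unfolding striated_def u_def x_def by auto
  then obtain M N :: "(nat,'f,'r) strc" and bs as where
    cf: "complete_formula L T (u @ x) \<theta>" and aM: "atomic_model L T M" and aN: "atomic_model L T N"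
    and eMN: "elem_sub L M N" and lbs: "length bs = length u" and las: "length as = length x"
    and sbs: "set bs \<subseteq> dom M" and sas: "set as \<subseteq> dom N - dom M" and sN: "satt N \<theta> (u @ x) (bs @ as)"
    unfolding extendible_def by blast
  have kB: "k < length Bs" using k1 by simp
  have "length (map length ts) = length (map length (take k Bs @ [concat (drop k Bs)]))" using ml by simp
  then have lt: "length ts = Suc k" using kB by simp
  have tsk: "ts = take k ts @ [ts!k]"
    using lt by (metis take_Suc_conv_app_nth lessI take_all order_refl)
  have ml1: "map length (take k ts) = map length (take k Bs)"
  proof -
    have "take k (map length ts) = take k (map length (take k Bs @ [concat (drop k Bs)]))" using ml by simp
    then show ?thesis using kB by (simp add: take_map)
  qed
  have ml2: "length (ts!k) = length (concat (drop k Bs))"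
  proof -
    have "map length ts ! k = map length (take k Bs @ [concat (drop k Bs)]) ! k" using ml by simp
    then show ?thesis using lt kB by (simp add: nth_append)
  qed
  have dk: "drop k Bs = Bs!k # drop (Suc k) Bs" using kB by (simp add: Cons_nth_drop_Suc)
  have tk: "take (Suc k) Bs = take k Bs @ [Bs!k]" using kB by (simp add: take_Suc_conv_app_nth)
  define lb where "lb = length (Bs!k)"
  have lk: "length (ts!k) = lb + length x" using ml2 dk unfolding lb_def x_def by simp
  define a1 where "a1 = concat (take k ts) @ take lb (ts!k)"
  define a2 where "a2 = drop lb (ts!k)"
  have ta: "concat ts = a1 @ a2"
  proof -
    have "concat ts = concat (take k ts) @ ts!k" using tsk by (metis concat_append concat.simps append_Nil2)
    then show ?thesis unfolding a1_def a2_def by simp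
  qed
  have lp: "length (concat (take k ts)) = length (concat (take k Bs))"
    by (rule length_concat_map[OF ml1])
  have la1: "length a1 = length u" unfolding a1_def u_def using lp lk tk lb_def by simp
  have la2: "length a2 = length x" unfolding a2_def using lk by simp
  let ?top = "last Ms"
  have ne: "Ms \<noteq> []" using gc by (simp add: good_chain_def)
  have atop: "atomic_model L T ?top"
  proof -
    have "length Ms - 1 < length Ms" using ne by simp
    then show ?thesis using gc GC_last[OF gc] by (simp add: good_chain_def)
  qed
  have mtop: "models L T ?top" and mN: "models L T N" and mM: "models L T M"
    using atop aN aM by (auto simp: atomic_model_def)
  have dux: "distinct (u @ x)" by (rule cf_distinct[OF cf])
  then have du: "distinct u" by simp
  have sa1: "set a1 \<subseteq> dom ?top" using GC_concat_dom[OF gc] ta by auto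
  have st2: "satt ?top \<theta> (u @ x) (a1 @ a2)" using sa ux ta by simp
  have same: "\<forall>\<phi>. fm_in L u \<phi> \<longrightarrow> (satt ?top \<phi> u a1 \<longleftrightarrow> satt M \<phi> u bs)"
  proof (intro allI impI)
    fix \<phi> assume f: "fm_in L u \<phi>"
    have "satt ?top \<phi> u a1 \<longleftrightarrow> satt N \<phi> u bs"
      by (rule CF_prefix[OF cf mtop mN st2 sN la1 lbs f])
    also have "\<dots> \<longleftrightarrow> satt M \<phi> u bs" using elem_sub_satt[OF eMN f du lbs sbs] by simp
    finally show "satt ?top \<phi> u a1 \<longleftrightarrow> satt M \<phi> u bs" .
  qed
  obtain g where iso: "iso_on L g ?top M" and ga: "map g a1 = bs"
    using BF[OF atop aM du la1 lbs sa1 sbs same] by blast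
  have inj: "inj_on g (dom ?top)" using iso by (simp add: iso_on_def)
  have gc1: "good_chain L T (map (img g) Ms) (map (map g) ts)" by (rule GC_rename[OF gc inj wT])
  define ts2 where "ts2 = take k (map (map g) ts) @ [take lb (map g (ts!k))]"
  have lts2: "length ts2 = length (map (map g) ts)" unfolding ts2_def using lt by simp
  have sub: "\<forall>j<length (map (map g) ts). set (ts2!j) \<subseteq> set (map (map g) ts ! j)"
  proof (intro allI impI)
    fix j assume j: "j < length (map (map g) ts)"
    show "set (ts2!j) \<subseteq> set (map (map g) ts ! j)"
    proof (cases "j < k")
      case True then show ?thesis unfolding ts2_def using lt by (simp add: nth_append)
    next
      case False
      then have "j = k" using j lt by simp
      then show ?thesis unfolding ts2_def using lt set_take_subset[of lb "map g (ts!k)"] by (simp add: nth_append)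
    qed
  qed
  have gc2: "good_chain L T (map (img g) Ms) ts2" by (rule GC_shrink[OF gc1 lts2 sub])
  have das: "set as \<inter> dom M = {}" using sas by blast
  have gcp: "good_chain L T [M, N] [[], as]" using GC_pair[OF aM aN eMN _ das] sas by blast
  have es: "elem_sub L (last (map (img g) Ms)) (hd [M, N])"
    using img_equiv[OF iso] ne by (simp add: last_map)
  have gc3: "good_chain L T (map (img g) Ms @ [N]) (ts2 @ [as])"
    using GC_append[OF gc2 gcp es] by simp
  have len3: "length (map (img g) Ms @ [N]) = Suc (Suc k)" using lM by simp
  have ml3: "map length (ts2 @ [as]) = map length (take (Suc k) Bs @ [concat (drop (Suc k) Bs)])"
  proof -
    have "map length (take k (map (map g) ts)) = map length (take k Bs)"
    proof -
      have "map length (take k (map (map g) ts)) = map length (take k ts)"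
        by (induct ts arbitrary: k) (auto simp: take_Cons')
      then show ?thesis using ml1 by simp
    qed
    moreover have "length (take lb (map g (ts!k))) = lb" using lk by simp
    ultimately show ?thesis unfolding ts2_def using tk las x_def lb_def by simp
  qed
  have cc: "concat (ts2 @ [as]) = bs @ as"
  proof -
    have "concat (ts2 @ [as]) = map g (concat (take k ts)) @ map g (take lb (ts!k)) @ as"
      unfolding ts2_def by (simp add: take_map map_concat)
    also have "\<dots> = map g a1 @ as" unfolding a1_def by simp
    finally show ?thesis using ga by simp
  qed
  have "satt (last (map (img g) Ms @ [N])) \<theta> (concat Bs) (concat (ts2 @ [as]))"
    using sN ux cc by simp
  then show ?thesis using gc3 len3 ml3 by blast
qed

lemma take_drop_last: "Bs \<noteq> [] \<Longrightarrow> take (length Bs - 1) Bs @ [concat (drop (length Bs - 1) Bs)] = Bs"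
  by (induct Bs rule: rev_induct) auto

lemma CB:
  assumes st: "striated L T \<theta> Bs" and ne: "Bs \<noteq> []" and wT: "\<forall>\<phi>\<in>T. wf_fm L \<phi>"
  shows "\<exists>(Ms :: (nat,'f,'r) strc list) ts. good_chain L T Ms ts \<and> length Ms = length Bs \<and>
     map length ts = map length Bs \<and> satt (last Ms) \<theta> (concat Bs) (concat ts)"
proof -
  have "k < length Bs \<Longrightarrow> \<exists>(Ms :: (nat,'f,'r) strc list) ts. good_chain L T Ms ts \<and> length Ms = Suc k \<and>
     map length ts = map length (take k Bs @ [concat (drop k Bs)]) \<and>
     satt (last Ms) \<theta> (concat Bs) (concat ts)" for k
  proof (induct k)
    case 0
    have cf: "complete_formula L T (concat Bs) \<theta>" using st by (simp add: striated_def)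
    obtain M :: "(nat,'f,'r) strc" and as where M: "atomic_model L T M" "satt M \<theta> (concat Bs) as"
      using cf_realized[OF cf] by blast
    have "set as \<subseteq> dom M" "length as = length (concat Bs)" using M(2) by (auto simp: satt_alt)
    then have "good_chain L T [M] [as]" "map length [as] = map length (take 0 Bs @ [concat (drop 0 Bs)])"
      using GC_single[OF M(1)] by auto
    moreover have "satt (last [M]) \<theta> (concat Bs) (concat [as])" using M(2) by simp
    ultimately show ?case by (intro exI[of _ "[M]"] exI[of _ "[as]"]) simp
  next
    case (Suc k)
    then obtain Ms :: "(nat,'f,'r) strc list" and ts where
      "good_chain L T Ms ts" "length Ms = Suc k" "map length ts = map length (take k Bs @ [concat (drop k Bs)])"
      "satt (last Ms) \<theta> (concat Bs) (concat ts)" by auto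
    then show ?case using CB_step[OF st wT Suc.prems] by blast
  qed
  then obtain Ms :: "(nat,'f,'r) strc list" and ts where R: "good_chain L T Ms ts" "length Ms = Suc (length Bs - 1)"
     "map length ts = map length (take (length Bs - 1) Bs @ [concat (drop (length Bs - 1) Bs)])"
     "satt (last Ms) \<theta> (concat Bs) (concat ts)" using ne by (meson diff_less zero_less_one length_greater_0_conv)
  have "map length ts = map length Bs" using R(3) by (simp only: take_drop_last[OF ne])
  moreover have "length Ms = length Bs" using R(2) ne by simp
  ultimately show ?thesis using R(1,4) by blast
qed

lemma matches_skip:
  assumes "length a = length a'" "length b = length b'" "length c = length c'"
    "matches e (a @ b @ c) (a' @ b' @ c')"
  shows "matches e (a @ c) (a' @ c')"
  unfolding matches_def
proof (intro allI impI)
  fix i assume i: "i < length (a @ c)"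
  show "e ((a @ c) ! i) = (a' @ c') ! i"
  proof (cases "i < length a")
    case True
    then have "e ((a @ b @ c) ! i) = (a' @ b' @ c') ! i" using assms(4) by (simp add: matches_def)
    then show ?thesis using True assms(1) by (simp add: nth_append)
  next
    case False
    define j where "j = i - length a"
    have ij: "i = length a + j" using False j_def by simp
    have jc: "j < length c" using i ij by simp
    have "length a + length b + j < length (a @ b @ c)" using jc by simp
    then have "e ((a @ b @ c) ! (length a + length b + j)) = (a' @ b' @ c') ! (length a + length b + j)"
      using assms(4) by (simp add: matches_def)
    then show ?thesis using ij assms(1,2) by (simp add: nth_append)
  qed
qed

lemma GC_sub_last:
  assumes "good_chain L T Ms ts" "j < length Ms"
  shows "elem_sub L (Ms!j) (last Ms)"
proof -
  have E: "\<forall>j j'. j \<le> j' \<and> j' < length Ms \<longrightarrow> elem_sub L (Ms!j) (Ms!j')"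
    using assms(1) unfolding good_chain_def by simp
  have "j \<le> length Ms - 1" "length Ms - 1 < length Ms" using assms(2) by auto
  then show ?thesis using E GC_last[OF assms(1)] by metis
qed

lemma GC_atomic:
  assumes "good_chain L T Ms ts" "j < length Ms"
  shows "atomic_model L T (Ms!j)" "set (ts!j) \<subseteq> dom (Ms!j)"
proof -
  have A: "\<forall>j<length Ms. atomic_model L T (Ms!j) \<and> set (ts!j) \<subseteq> dom (Ms!j)"
    using assms(1) unfolding good_chain_def by simp
  then show "atomic_model L T (Ms!j)" "set (ts!j) \<subseteq> dom (Ms!j)" using assms(2) by auto
qed

lemma GC_atomic_last:
  assumes "good_chain L T Ms ts"
  shows "atomic_model L T (last Ms)"
proof -
  have ne: "Ms \<noteq> []" using assms by (simp add: good_chain_def)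
  then have "length Ms - 1 < length Ms" by simp
  then show ?thesis using GC_atomic(1)[OF assms] GC_last[OF assms] by metis
qed

theorem lemma3p2p5:
  fixes L :: "('f::countable, 'r::countable) lang"
    and T :: "('f,'r) fm set"
    and U :: "('a,'f,'r) strc"
    and z :: "nat list" and xs ys :: "nat list list"
    and \<alpha> \<beta> :: "('f,'r) fm"
  assumes "complete_theory L T"
    and "atomic_model L T U" and "\<not> countable (dom U)"
    and "striated L T \<alpha> (z # xs)"
    and "striated L T \<beta> (z # ys)"
    and "distinct (z @ concat xs @ concat ys)"
    and "entails L T (Iff (Exs (concat xs) \<alpha>) (Exs (concat ys) \<beta>))"
  shows "\<exists>\<psi>. striated L T \<psi> (z # xs @ ys) \<and> entails L T (Imp \<psi> (Conj \<alpha> \<beta>))"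
proof -
  have wT: "\<forall>\<phi>\<in>T. wf_fm L \<phi>" using assms(1) by (auto simp: complete_theory_def sentence_def)
  have dist: "distinct (z @ concat xs @ concat ys)" by fact
  have da: "distinct (z @ concat xs)" using dist by auto
  have db: "distinct (z @ concat ys)" using dist by auto
  have dz: "distinct z" using dist by simp
  have cfa: "complete_formula L T (z @ concat xs) \<alpha>" using assms(4) by (simp add: striated_def)
  have cfb: "complete_formula L T (z @ concat ys) \<beta>" using assms(5) by (simp add: striated_def)
  have fa: "fm_in L (z @ concat xs) \<alpha>" by (rule cf_fm_in[OF cfa])
  have fb: "fm_in L (z @ concat ys) \<beta>" by (rule cf_fm_in[OF cfb])
  obtain Ms :: "(nat,'f,'r) strc list" and ts where
    gA: "good_chain L T Ms ts" and lA: "length Ms = length (z # xs)" and mA: "map length ts = map length (z # xs)"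
    and sA: "satt (last Ms) \<alpha> (concat (z # xs)) (concat ts)"
    using CB[OF assms(4) _ wT] by blast
  obtain Ns :: "(nat,'f,'r) strc list" and us where
    gB: "good_chain L T Ns us" and lB: "length Ns = length (z # ys)" and mB: "map length us = map length (z # ys)"
    and sB: "satt (last Ns) \<beta> (concat (z # ys)) (concat us)"
    using CB[OF assms(5) _ wT] by blast
  obtain t0 tr where ts: "ts = t0 # tr" using mA by (cases ts) auto
  obtain u0 ur where us: "us = u0 # ur" using mB by (cases us) auto
  have lt0: "length t0 = length z" and mtr: "map length tr = map length xs" using mA ts by auto
  have lu0: "length u0 = length z" and mur: "map length ur = map length ys" using mB us by auto
  have ltr: "length (concat tr) = length (concat xs)" by (rule length_concat_map[OF mtr])
  have lur: "length (concat ur) = length (concat ys)" by (rule length_concat_map[OF mur])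
  let ?Mt = "last Ms" and ?N0 = "Ns!0" and ?Nl = "last Ns"
  have neM: "Ms \<noteq> []" and neN: "Ns \<noteq> []" using lA lB by auto
  have aMt: "atomic_model L T ?Mt" by (rule GC_atomic_last[OF gA])
  have aNl: "atomic_model L T ?Nl" by (rule GC_atomic_last[OF gB])
  have aN0: "atomic_model L T ?N0" and su0: "set u0 \<subseteq> dom ?N0"
    using GC_atomic[OF gB, of 0] neN us by auto
  have mMt: "models L T ?Mt" and mNl: "models L T ?Nl" using aMt aNl by (auto simp: atomic_model_def)
  have sMt: "satt ?Mt \<alpha> (z @ concat xs) (t0 @ concat tr)" using sA ts by simp
  have st0: "set t0 \<subseteq> dom ?Mt" using sMt by (auto simp: satt_alt)
  have s1: "satt ?Mt (Exs (concat xs) \<alpha>) z t0" by (rule satt_Exs_I[OF sMt da ltr lt0])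
  have fvEb: "freevars (Exs (concat ys) \<beta>) \<subseteq> set z" using fb db by (auto simp: freevars_Exs fm_in_def)
  have s2: "satt ?Mt (Exs (concat ys) \<beta>) z t0"
  proof -
    obtain e where e: "range e \<subseteq> dom ?Mt" "matches e z t0"
      using env_exists[OF dz lt0 st0 models_ne[OF mMt]] by blast
    have "sat ?Mt e (Exs (concat xs) \<alpha>)" using s1 e by (simp add: satt_alt)
    moreover have "sat ?Mt e (Iff (Exs (concat xs) \<alpha>) (Exs (concat ys) \<beta>))"
      using entails_sat[OF assms(7) mMt e(1)] .
    ultimately have "sat ?Mt e (Exs (concat ys) \<beta>)" by (simp add: sat_Iff)
    then show ?thesis using satt_e0[OF lt0 st0 fvEb e] by simp
  qed
  have fvb: "freevars \<beta> \<subseteq> set (z @ concat ys)" using fb by (simp add: fm_in_def)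
  obtain ds where ds: "length ds = length (concat ys)" "satt ?Mt \<beta> (z @ concat ys) (t0 @ ds)"
    using satt_Exs_D[OF s2 db models_ne[OF mMt] fvb] by blast
  have sNl: "satt ?Nl \<beta> (z @ concat ys) (u0 @ concat ur)" using sB us by simp
  have eN0: "elem_sub L ?N0 ?Nl" using GC_sub_last[OF gB, of 0] neN by simp
  have same: "\<forall>\<phi>. fm_in L z \<phi> \<longrightarrow> (satt ?Mt \<phi> z t0 \<longleftrightarrow> satt ?N0 \<phi> z u0)"
  proof (intro allI impI)
    fix \<phi> assume f: "fm_in L z \<phi>"
    have "satt ?Mt \<phi> z t0 \<longleftrightarrow> satt ?Nl \<phi> z u0"
      by (rule CF_prefix[OF cfb mMt mNl ds(2) sNl lt0 lu0 f])
    also have "\<dots> \<longleftrightarrow> satt ?N0 \<phi> z u0" using elem_sub_satt[OF eN0 f dz lu0 su0] by simp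
    finally show "satt ?Mt \<phi> z t0 \<longleftrightarrow> satt ?N0 \<phi> z u0" .
  qed
  obtain g where iso: "iso_on L g ?Mt ?N0" and gt0: "map g t0 = u0"
    using BF[OF aMt aN0 dz lt0 lu0 st0 su0 same] by blast
  have inj: "inj_on g (dom ?Mt)" using iso by (simp add: iso_on_def)
  have gc1: "good_chain L T (map (img g) Ms) (map (map g) ts)" by (rule GC_rename[OF gA inj wT])
  have eq: "elem_sub L (img g ?Mt) ?N0 \<and> elem_sub L ?N0 (img g ?Mt)" by (rule img_equiv[OF iso])
  have es: "elem_sub L (last (map (img g) Ms)) (hd Ns)" using eq neM neN by (simp add: last_map hd_conv_nth)
  define Cs where "Cs = map (img g) Ms @ tl Ns"
  define cs where "cs = map (map g) ts @ tl us"
  have gC: "good_chain L T Cs cs" unfolding Cs_def cs_def by (rule GC_append[OF gc1 gB es])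
  define Bs where "Bs = z # xs @ ys"
  have lC: "length Cs = length Bs" unfolding Cs_def Bs_def using lA lB by simp
  have mC: "map length cs = map length Bs" unfolding cs_def Bs_def using mA mB us
    by (simp add: comp_def)
  define W where "W = z @ concat xs @ concat ys"
  have cB: "concat Bs = W" unfolding Bs_def W_def by simp
  have cc: "concat cs = u0 @ map g (concat tr) @ concat ur"
    unfolding cs_def using ts us gt0 by (simp add: map_concat)
  let ?top = "last Cs"
  have atop: "atomic_model L T ?top" by (rule GC_atomic_last[OF gC])
  have sc: "set (concat cs) \<subseteq> dom ?top" by (rule GC_concat_dom[OF gC])
  have lc: "length (concat cs) = length W" using length_concat_map[OF mC] cB by simp
  obtain \<psi> where psi: "complete_formula L T W \<psi>" "satt ?top \<psi> W (concat cs)"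
    "\<forall>\<phi>. fm_in L W \<phi> \<and> satt ?top \<phi> W (concat cs) \<longrightarrow> entails L T (Imp \<psi> \<phi>)"
    using ISOL[OF atop _ lc sc] dist W_def by blast
  have stMt: "is_struct L ?Mt" by (rule atomic_struct[OF aMt])
  have wfa: "wf_fm L \<alpha>" and wfb: "wf_fm L \<beta>" using fa fb by (auto simp: fm_in_def)
  have lts: "length (t0 @ concat tr) = length (z @ concat xs)" using lt0 ltr by simp
  have sts: "set (t0 @ concat tr) \<subseteq> dom ?Mt" using sMt by (auto simp: satt_alt)
  have sa1: "satt (img g ?Mt) \<alpha> (z @ concat xs) (map g (t0 @ concat tr))"
    using iso_satt[OF iso_img[OF inj stMt] wfa lts sts] sMt by simp
  have Ci: "Cs ! (length Ms - 1) = img g ?Mt"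
    unfolding Cs_def using neM by (simp add: nth_append last_conv_nth)
  have "length Ms - 1 < length Cs" unfolding Cs_def using neM by (cases Ms) auto
  then have eC: "elem_sub L (img g ?Mt) ?top" using GC_sub_last[OF gC] Ci by metis
  have sgs: "set (map g (t0 @ concat tr)) \<subseteq> dom (img g ?Mt)" using sts by auto
  have sa2: "satt ?top \<alpha> (z @ concat xs) (u0 @ map g (concat tr))"
    using elem_sub_satt[OF eC fa da _ sgs] sa1 lts gt0 lu0 ltr by simp
  have sa3: "satt ?top \<alpha> W (concat cs)"
  proof (rule satt_mono[OF sa2])
    show "length (concat cs) = length W" by (rule lc)
    show "set (concat cs) \<subseteq> dom ?top" by (rule sc)
    fix e assume "matches e W (concat cs)"
    then have "matches e ((z @ concat xs) @ concat ys) ((u0 @ map g (concat tr)) @ concat ur)"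
      unfolding W_def cc by simp
    then show "matches e (z @ concat xs) (u0 @ map g (concat tr))"
      by (rule matches_prefix) (simp add: lu0 ltr)
  qed
  have eNl: "elem_sub L ?Nl ?top"
  proof (cases "tl Ns = []")
    case True
    then have "Ns = [?N0]" using neN by (cases Ns) auto
    then have "?Nl = ?N0" by (metis last.simps)
    moreover have "?top = img g ?Mt" unfolding Cs_def using True neM by (simp add: last_map)
    ultimately show ?thesis using eq by simp
  next
    case False
    then have "?top = ?Nl" unfolding Cs_def using neN by (simp add: last_tl)
    then show ?thesis using elem_sub_refl[OF atomic_struct[OF aNl]] by simp
  qed
  have lub: "length (u0 @ concat ur) = length (z @ concat ys)" using lu0 lur by simp
  have sub: "set (u0 @ concat ur) \<subseteq> dom ?Nl" using sNl by (auto simp: satt_alt)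
  have sb2: "satt ?top \<beta> (z @ concat ys) (u0 @ concat ur)"
    using elem_sub_satt[OF eNl fb db lub sub] sNl by simp
  have sb3: "satt ?top \<beta> W (concat cs)"
  proof (rule satt_mono[OF sb2])
    show "length (concat cs) = length W" by (rule lc)
    show "set (concat cs) \<subseteq> dom ?top" by (rule sc)
    fix e assume "matches e W (concat cs)"
    then have "matches e (z @ concat xs @ concat ys) (u0 @ map g (concat tr) @ concat ur)"
      unfolding W_def cc by simp
    then show "matches e (z @ concat ys) (u0 @ concat ur)"
      by (rule matches_skip[rotated 3]) (simp_all add: lu0 ltr lur)
  qed
  have sab: "satt ?top (Conj \<alpha> \<beta>) W (concat cs)" using sa3 sb3 by (auto simp: satt_alt)
  have fab: "fm_in L W (Conj \<alpha> \<beta>)" using fa fb unfolding W_def fm_in_def by auto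
  have ent: "entails L T (Imp \<psi> (Conj \<alpha> \<beta>))" using psi(3) sab fab by blast
  have cfB: "complete_formula L T (concat Bs) \<psi>" using psi(1) cB by simp
  have sB': "satt (last Cs) \<psi> (concat Bs) (concat cs)" using psi(2) cB by simp
  have "striated L T \<psi> Bs" by (rule GC_final[OF gC lC mC cfB sB'])
  then show ?thesis using ent Bs_def by blast
qed

end
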